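(* Let $n\ge3$, $\alpha\in(-\tfrac12,\infty)$, $p\in(1,\infty)$ with conjugate exponent $q=p/(p-1)$, and $f\in L^p(\mathbb{S}^{n-1},\mathbb{R}^n)$. Suppose $u=P_\alpha[f]$ and $u(0)=0$. Then for all $x\in\mathbb{B}^n$, $$|u(x)|\le G_p(|x|)\,\|f\|_{L^p},$$ where $G_p(0)=0$ and $G_p$ is differentiable on $(0,1)$ with $\frac{d}{dr}G_p(r)$ continuous on $(0,1)$. The inequality is sharp (the factor $G_p(|x|)$ cannot be replaced by a smaller one).
   Context: $\mathbb{B}^n$ is the open unit ball of $\mathbb{R}^n$, $\mathbb{S}^{n-1}$ the unit sphere with normalized surface measure $\sigma$, $e_n=(0,\dots,0,1)$. $C_{n,\alpha}=\frac{\Gamma(\frac n2+\alpha)\Gamma(1+\alpha)}{\Gamma(\frac n2)\Gamma(1+2\alpha)}$, $P_\alpha(x,\zeta)=C_{n,\alpha}\frac{(1-|x|^2)^{1+2\alpha}}{|x-\zeta|^{n+2\alpha}}$, $P_\alpha[f](x)=\int_{\mathbb{S}^{n-1}}P_\alpha(x,\zeta)f(\zeta)d\sigma(\zeta)$; $\|f\|_{L^p}=(\int|f|^pd\sigma)^{1/p}$ with $|\cdot|$ the Euclidean norm. For $r\in[0,1)$, $G_p(r)=\inf_{a\in[0,\infty)}\left(\int_{\mathbb{S}^{n-1}}|P_\alpha(re_n,\eta)-a|^q\,d\sigma(\eta)\right)^{1/q}$. *)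

theory Defs
  imports "HOL-Analysis.Analysis"
begin

text \<open>Normalized surface measure on the unit sphere of the Euclidean space \<open>real^'n\<close>,
  realised as the cone measure: the push-forward of the normalized Lebesgue measure on the
  unit ball under the radial projection \<open>x \<mapsto> x / |x|\<close> (the null point 0 is sent to an
  arbitrary point of the sphere).\<close>
definition sphere_sigma :: "('a::euclidean_space) measure" where
  "sphere_sigma =
     distr (uniform_measure lborel (ball 0 1)) (restrict_space borel (sphere 0 1))
       (\<lambda>x. if x = 0 then (SOME z. z \<in> sphere (0::'a) 1) else x /\<^sub>R norm x)"

definition C_const :: "nat \<Rightarrow> real \<Rightarrow> real" where
  "C_const n \<alpha> = Gamma (real n / 2 + \<alpha>) * Gamma (1 + \<alpha>) / (Gamma (real n / 2) * Gamma (1 + 2 * \<alpha>))"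

definition P_kernel :: "real \<Rightarrow> real^'n \<Rightarrow> real^'n \<Rightarrow> real" where
  "P_kernel \<alpha> x \<zeta> = C_const CARD('n) \<alpha> * (1 - norm x ^ 2) powr (1 + 2 * \<alpha>)
      / norm (x - \<zeta>) powr (real CARD('n) + 2 * \<alpha>)"

definition P_transform :: "real \<Rightarrow> (real^'n \<Rightarrow> real^'n) \<Rightarrow> real^'n \<Rightarrow> real^'n" where
  "P_transform \<alpha> f x = integral\<^sup>L sphere_sigma (\<lambda>\<zeta>. P_kernel \<alpha> x \<zeta> *\<^sub>R f \<zeta>)"

definition in_Lp :: "real \<Rightarrow> (real^'n \<Rightarrow> real^'n) \<Rightarrow> bool" where
  "in_Lp p f \<longleftrightarrow> f \<in> borel_measurable sphere_sigma
      \<and> integrable sphere_sigma (\<lambda>\<zeta>. norm (f \<zeta>) powr p)"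

definition Lp_norm :: "real \<Rightarrow> (real^'n \<Rightarrow> real^'n) \<Rightarrow> real" where
  "Lp_norm p f = (integral\<^sup>L sphere_sigma (\<lambda>\<zeta>. norm (f \<zeta>) powr p)) powr (1 / p)"

definition e_last :: "real^('n::{finite,wellorder})" where
  "e_last = axis (Max (UNIV :: 'n set)) 1"

definition G_fun :: "real \<Rightarrow> real \<Rightarrow> real \<Rightarrow> ('n::{finite,wellorder}) itself \<Rightarrow> real" where
  "G_fun \<alpha> p r _ = (let q = p / (p - 1) in
     (INF a\<in>{0::real..}. (integral\<^sup>L (sphere_sigma :: (real^('n::{finite,wellorder})) measure)
        (\<lambda>\<eta>. \<bar>P_kernel \<alpha> (r *\<^sub>R (e_last :: real^('n::{finite,wellorder}))) \<eta> - a\<bar> powr q)) powr (1 / q)))"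

end

theory Submission
  imports Defs
begin

lemma ss_space: "space (sphere_sigma :: 'a::euclidean_space measure) = sphere 0 1"
  by (simp add: sphere_sigma_def)

lemma ss_sets: "sets (sphere_sigma :: 'a::euclidean_space measure) = sets (restrict_space borel (sphere 0 1))"
  by (simp add: sphere_sigma_def)

definition radproj :: "'a::euclidean_space \<Rightarrow> 'a" where
  "radproj x = (if x = 0 then (SOME z. z \<in> sphere (0::'a) 1) else x /\<^sub>R norm x)"

lemma radproj_sphere: "radproj (x::'a::euclidean_space) \<in> sphere 0 1"
proof (cases "x = 0")
  case True
  have "\<exists>z. z \<in> sphere (0::'a) 1"
    by (metis norm_Basis dist_0_norm mem_sphere SOME_Basis)
  then show ?thesis using True unfolding radproj_def by (metis someI_ex)
qed (simp add: radproj_def)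

lemma radproj_meas: "radproj \<in> borel_measurable (borel :: 'a::euclidean_space measure)"
  unfolding radproj_def by measurable

lemma ss_def2: "sphere_sigma = distr (uniform_measure lborel (ball 0 1)) (restrict_space borel (sphere 0 1)) (radproj :: 'a::euclidean_space \<Rightarrow> 'a)"
  unfolding sphere_sigma_def radproj_def ..

lemma radproj_meas2: "radproj \<in> measurable (uniform_measure lborel (ball 0 1)) (restrict_space borel (sphere (0::'a::euclidean_space) 1))"
  apply (rule measurable_restrict_space2)
  using radproj_meas radproj_sphere by (auto simp: measurable_def)

lemma ball_pos: "emeasure lborel (ball (0::'a::euclidean_space) 1) \<noteq> 0"
  "emeasure lborel (ball (0::'a::euclidean_space) 1) \<noteq> \<infinity>"
proof -
  have "unit_ball_vol (real DIM('a)) > 0" by (rule unit_ball_vol_pos) simp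
  then show "emeasure lborel (ball (0::'a::euclidean_space) 1) \<noteq> 0"
    "emeasure lborel (ball (0::'a::euclidean_space) 1) \<noteq> \<infinity>"
    by (simp_all add: emeasure_ball less_imp_neq[symmetric] del: unit_ball_vol_pos)
qed

lemma unif_space1: "emeasure (uniform_measure lborel (ball (0::'a::euclidean_space) 1)) UNIV = 1"
  using ball_pos[where 'a='a] emeasure_lborel_ball_finite[of "0::'a" 1]
  by (simp add: ennreal_divide_self)

lemma ss_space1: "emeasure (sphere_sigma :: 'a::euclidean_space measure) (sphere 0 1) = 1"
proof -
  have "sphere (0::'a) 1 \<in> sets (restrict_space borel (sphere 0 1))"
    using sets.top[of "restrict_space borel (sphere (0::'a) 1)"] by simp
  moreover have "{x::'a. norm (radproj x) = 1} = UNIV" using radproj_sphere by auto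
  ultimately show ?thesis unfolding ss_def2
    by (subst emeasure_distr[OF radproj_meas2]) (auto simp: unif_space1 vimage_def)
qed

lemma ss_finite: "finite_measure (sphere_sigma :: 'a::euclidean_space measure)"
  by (rule finite_measureI) (simp add: ss_space ss_space1)

lemma ss_measure1: "measure (sphere_sigma :: 'a::euclidean_space measure) (sphere 0 1) = 1"
  by (simp add: measure_def ss_space1)

lemma ss_meas_cont: "continuous_on (sphere 0 1) h \<Longrightarrow> h \<in> borel_measurable (sphere_sigma::'a::euclidean_space measure)"
  using measurable_cong_sets[OF ss_sets refl] borel_measurable_continuous_on_restrict by blast

lemma cont_bound:
  fixes h :: "'a::metric_space \<Rightarrow> 'b::real_normed_vector"
  assumes "compact K" "continuous_on K h"
  obtains B where "\<And>x. x \<in> K \<Longrightarrow> norm (h x) \<le> B"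
  using compact_imp_bounded[OF compact_continuous_image[OF assms(2,1)]]
  unfolding bounded_iff by auto

lemma ss_int_cont:
  fixes h :: "'a::euclidean_space \<Rightarrow> 'b::{banach,second_countable_topology}"
  assumes "continuous_on (sphere 0 1) h"
  shows "integrable sphere_sigma h"
proof -
  obtain B where B: "\<And>x. x \<in> sphere 0 1 \<Longrightarrow> norm (h x) \<le> B"
    using cont_bound[OF compact_sphere assms] by blast
  show ?thesis
    by (rule finite_measure.integrable_const_bound[OF ss_finite, where B=B])
       (auto simp: ss_space B intro!: ss_meas_cont assms)
qed

lemma ss_integral_cont:
  fixes G :: "'b::euclidean_space \<Rightarrow> 'a::euclidean_space \<Rightarrow> real"
  assumes cont: "continuous_on (A \<times> sphere 0 1) (\<lambda>(x,\<eta>). G x \<eta>)"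
  shows "continuous_on A (\<lambda>x. \<integral>\<eta>. G x \<eta> \<partial>sphere_sigma)"
  unfolding continuous_on_sequentially
proof (intro allI ballI impI, elim conjE)
  fix X :: "nat \<Rightarrow> 'b" and x0 assume x0: "x0 \<in> A" and XA: "\<forall>n. X n \<in> A" and lim: "X \<longlonglongrightarrow> x0"
  define K where "K = insert x0 (range X)"
  have K: "compact K" "K \<subseteq> A" using compact_sequence_with_limit[OF lim] x0 XA by (auto simp: K_def)
  have cK: "continuous_on (K \<times> sphere 0 1) (\<lambda>(x,\<eta>). G x \<eta>)"
    by (rule continuous_on_subset[OF cont]) (use K in auto)
  obtain B where B: "\<And>z. z \<in> K \<times> sphere 0 1 \<Longrightarrow> norm ((\<lambda>(x,\<eta>). G x \<eta>) z) \<le> B"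
    using cont_bound[OF compact_Times[OF K(1) compact_sphere] cK] by blast
  have contx: "continuous_on (sphere 0 1) (G x)" if "x \<in> A" for x
  proof -
    have "continuous_on (sphere 0 1) ((\<lambda>(x,\<eta>). G x \<eta>) \<circ> (\<lambda>\<eta>. (x, \<eta>)))"
      by (rule continuous_on_compose) (auto intro!: continuous_intros continuous_on_subset[OF cont] simp: that)
    then show ?thesis by (simp add: o_def)
  qed
  show "((\<lambda>x. \<integral>\<eta>. G x \<eta> \<partial>sphere_sigma) \<circ> X) \<longlonglongrightarrow> (\<integral>\<eta>. G x0 \<eta> \<partial>sphere_sigma)"
    unfolding o_def
  proof (rule integral_dominated_convergence[where w="\<lambda>_. B"])
    show "G x0 \<in> borel_measurable sphere_sigma" by (rule ss_meas_cont[OF contx[OF x0]])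
    show "G (X n) \<in> borel_measurable sphere_sigma" for n by (rule ss_meas_cont[OF contx[OF XA[rule_format]]])
    show "integrable sphere_sigma (\<lambda>_. B)" by (rule finite_measure.integrable_const[OF ss_finite])
    show "AE \<eta> in sphere_sigma. (\<lambda>n. G (X n) \<eta>) \<longlonglongrightarrow> G x0 \<eta>"
    proof (rule AE_I2)
      fix \<eta> :: 'a assume "\<eta> \<in> space sphere_sigma"
      then have \<eta>: "\<eta> \<in> sphere 0 1" by (simp add: ss_space)
      have lim2: "(\<lambda>n. (X n, \<eta>)) \<longlonglongrightarrow> (x0, \<eta>)" by (intro tendsto_Pair lim tendsto_const)
      have m1: "\<forall>n. (X n, \<eta>) \<in> A \<times> sphere 0 1" using XA \<eta> by auto
      have m2: "(x0, \<eta>) \<in> A \<times> sphere 0 1" using x0 \<eta> by auto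
      have "((\<lambda>(x,\<eta>). G x \<eta>) \<circ> (\<lambda>n. (X n, \<eta>))) \<longlonglongrightarrow> (\<lambda>(x,\<eta>). G x \<eta>) (x0, \<eta>)"
        by (rule cont[unfolded continuous_on_sequentially, rule_format, OF m2 conjI[OF m1 lim2]])
      then show "(\<lambda>n. G (X n) \<eta>) \<longlonglongrightarrow> G x0 \<eta>" by (simp add: o_def)
    qed
    show "AE \<eta> in sphere_sigma. norm (G (X n) \<eta>) \<le> B" for n
    proof (rule AE_I2)
      fix \<eta> :: 'a assume "\<eta> \<in> space sphere_sigma"
      then have "(X n, \<eta>) \<in> K \<times> sphere 0 1" by (simp add: ss_space K_def)
      from B[OF this] show "norm (G (X n) \<eta>) \<le> B" by simp
    qed
  qed
qed

lemma quot_bound: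
  fixes f f' :: "real \<Rightarrow> real"
  assumes h: "h \<noteq> 0" and d: "\<And>x. \<bar>x - s0\<bar> \<le> \<bar>h\<bar> \<Longrightarrow> (f has_real_derivative f' x) (at x)"
    and b: "\<And>x. \<bar>x - s0\<bar> \<le> \<bar>h\<bar> \<Longrightarrow> \<bar>f' x\<bar> \<le> B"
  shows "\<bar>(f (s0+h) - f s0)/h\<bar> \<le> B"
proof (cases "h > 0")
  case True
  obtain z where z: "s0 < z" "z < s0 + h" "f (s0+h) - f s0 = (s0 + h - s0) * f' z"
    using MVT2[of s0 "s0+h" f f'] True d by force
  have "\<bar>z - s0\<bar> \<le> \<bar>h\<bar>" using z True by auto
  then show ?thesis using z(3) b True by simp
next
  case False
  then have hn: "h < 0" using h by auto
  obtain z where z: "s0 + h < z" "z < s0" "f s0 - f (s0+h) = (s0 - (s0 + h)) * f' z"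
    using MVT2[of "s0+h" s0 f f'] hn d by force
  have "\<bar>z - s0\<bar> \<le> \<bar>h\<bar>" using z hn by auto
  moreover have "(f (s0+h) - f s0)/h = f' z" using z(3) hn by (simp add: field_simps)
  ultimately show ?thesis using b by simp
qed

lemma ss_integral_deriv:
  fixes H H' :: "real \<Rightarrow> 'a::euclidean_space \<Rightarrow> real"
  assumes I: "open I" "s0 \<in> I"
    and contH': "continuous_on (I \<times> sphere 0 1) (\<lambda>(s,\<eta>). H' s \<eta>)"
    and contH: "\<And>s. s \<in> I \<Longrightarrow> continuous_on (sphere 0 1) (H s)"
    and der: "\<And>s \<eta>. s \<in> I \<Longrightarrow> \<eta> \<in> sphere 0 1 \<Longrightarrow> ((\<lambda>s. H s \<eta>) has_real_derivative H' s \<eta>) (at s)"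
  shows "((\<lambda>s. \<integral>\<eta>. H s \<eta> \<partial>sphere_sigma) has_real_derivative (\<integral>\<eta>. H' s0 \<eta> \<partial>sphere_sigma)) (at s0)"
proof -
  obtain \<delta> where \<delta>: "\<delta> > 0" "cball s0 \<delta> \<subseteq> I" using open_contains_cball I by blast
  have cK: "continuous_on (cball s0 \<delta> \<times> sphere 0 1) (\<lambda>(s,\<eta>). H' s \<eta>)"
    by (rule continuous_on_subset[OF contH']) (use \<delta> in auto)
  obtain B where B: "\<And>z. z \<in> cball s0 \<delta> \<times> sphere 0 1 \<Longrightarrow> norm ((\<lambda>(s,\<eta>). H' s \<eta>) z) \<le> B"
    using cont_bound[OF compact_Times[OF compact_cball compact_sphere] cK] by blast
  have contH's: "continuous_on (sphere 0 1) (H' s)" if "s \<in> I" for s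
  proof -
    have "continuous_on (sphere 0 1) ((\<lambda>(x,\<eta>). H' x \<eta>) \<circ> (\<lambda>\<eta>. (s, \<eta>)))"
      by (rule continuous_on_compose) (auto intro!: continuous_intros continuous_on_subset[OF contH'] simp: that)
    then show ?thesis by (simp add: o_def)
  qed
  have intH: "integrable sphere_sigma (H s)" if "s \<in> I" for s
    by (rule ss_int_cont[OF contH[OF that]])
  define F where "F = (\<lambda>s. \<integral>\<eta>. H s \<eta> \<partial>(sphere_sigma::'a measure))"
  have "((\<lambda>h. (F (s0 + h) - F s0) / h) \<longlongrightarrow> (\<integral>\<eta>. H' s0 \<eta> \<partial>sphere_sigma)) (at 0 within ball 0 \<delta>)"
    unfolding tendsto_at_iff_sequentially
  proof (intro allI impI)
    fix X :: "nat \<Rightarrow> real" assume X: "\<forall>i. X i \<in> ball 0 \<delta> - {0}" and lim: "X \<longlonglongrightarrow> 0"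
    have XI: "s0 + X n \<in> I" for n
    proof -
      have "\<bar>X n\<bar> < \<delta>" using X by (auto simp: dist_real_def)
      then have "s0 + X n \<in> cball s0 \<delta>" by (simp add: dist_real_def)
      then show ?thesis using \<delta> by blast
    qed
    have eq: "(F (s0 + X n) - F s0) / X n = (\<integral>\<eta>. (H (s0 + X n) \<eta> - H s0 \<eta>) / X n \<partial>sphere_sigma)" for n
      unfolding F_def by (simp add: intH XI I)
    have "(\<lambda>n. \<integral>\<eta>. (H (s0 + X n) \<eta> - H s0 \<eta>) / X n \<partial>sphere_sigma) \<longlonglongrightarrow> (\<integral>\<eta>. H' s0 \<eta> \<partial>sphere_sigma)"
    proof (rule integral_dominated_convergence[where w="\<lambda>_. B"])
      show "H' s0 \<in> borel_measurable sphere_sigma" by (rule ss_meas_cont[OF contH's[OF I(2)]])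
      show "(\<lambda>\<eta>. (H (s0 + X n) \<eta> - H s0 \<eta>) / X n) \<in> borel_measurable sphere_sigma" for n
        using X by (intro ss_meas_cont continuous_intros contH XI I) auto
      show "integrable sphere_sigma (\<lambda>_. B)" by (rule finite_measure.integrable_const[OF ss_finite])
      show "AE \<eta> in sphere_sigma. (\<lambda>n. (H (s0 + X n) \<eta> - H s0 \<eta>) / X n) \<longlonglongrightarrow> H' s0 \<eta>"
      proof (rule AE_I2)
        fix \<eta> :: 'a assume "\<eta> \<in> space sphere_sigma"
        then have \<eta>: "\<eta> \<in> sphere 0 1" by (simp add: ss_space)
        have "((\<lambda>h. (H (s0 + h) \<eta> - H s0 \<eta>) / h) \<longlongrightarrow> H' s0 \<eta>) (at 0)"
          using der[OF I(2) \<eta>] unfolding DERIV_def .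
        then show "(\<lambda>n. (H (s0 + X n) \<eta> - H s0 \<eta>) / X n) \<longlonglongrightarrow> H' s0 \<eta>"
          unfolding tendsto_at_iff_sequentially using X lim by (auto simp: o_def)
      qed
      show "AE \<eta> in sphere_sigma. norm ((H (s0 + X n) \<eta> - H s0 \<eta>) / X n) \<le> B" for n
      proof (rule AE_I2)
        fix \<eta> :: 'a assume "\<eta> \<in> space sphere_sigma"
        then have \<eta>: "\<eta> \<in> sphere 0 1" by (simp add: ss_space)
        have Xn: "X n \<noteq> 0" "\<bar>X n\<bar> < \<delta>" using X by (auto simp: dist_real_def)
        have "\<bar>(H (s0 + X n) \<eta> - H s0 \<eta>) / X n\<bar> \<le> B"
        proof (rule quot_bound[where f="\<lambda>s. H s \<eta>" and f'="\<lambda>s. H' s \<eta>", OF Xn(1)])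
          fix x assume "\<bar>x - s0\<bar> \<le> \<bar>X n\<bar>"
          then have "x \<in> cball s0 \<delta>" using Xn by (auto simp: dist_real_def)
          then show "((\<lambda>s. H s \<eta>) has_real_derivative H' x \<eta>) (at x)" "\<bar>H' x \<eta>\<bar> \<le> B"
            using der[OF _ \<eta>] \<delta> B[of "(x, \<eta>)"] \<eta> by auto
        qed
        then show "norm ((H (s0 + X n) \<eta> - H s0 \<eta>) / X n) \<le> B" by simp
      qed
    qed
    then show "((\<lambda>h. (F (s0 + h) - F s0) / h) \<circ> X) \<longlonglongrightarrow> (\<integral>\<eta>. H' s0 \<eta> \<partial>sphere_sigma)"
      by (simp add: o_def eq)
  qed
  moreover have eqat: "at (0::real) within ball 0 \<delta> = at 0" by (rule at_within_open) (use \<delta> in auto)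
  ultimately show ?thesis
    unfolding DERIV_def F_def[symmetric] by simp
qed

definition psi :: "real \<Rightarrow> real \<Rightarrow> real" where "psi q s = \<bar>s\<bar> powr q"
definition phi :: "real \<Rightarrow> real \<Rightarrow> real" where
  "phi q s = (if s \<le> 0 then - ((-s) powr (q-1)) else s powr (q-1))"

lemma psi_cont: "q > 0 \<Longrightarrow> continuous_on UNIV (psi q)"
  unfolding psi_def by (intro continuous_on_powr' continuous_intros) auto

lemma phi_cont: assumes "q > 1" shows "continuous_on UNIV (phi q)"
proof -
  have "continuous_on UNIV (\<lambda>s. if id s \<le> 0 then - ((-s) powr (q-1)) else s powr (q-1))"
  proof (rule continuous_on_cases_le)
    show "continuous_on {x \<in> UNIV. id x \<le> 0} (\<lambda>s. - ((-s) powr (q-1)))"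
      by (intro continuous_intros continuous_on_powr') (use assms in auto)
    show "continuous_on {x \<in> UNIV. 0 \<le> id x} (\<lambda>s. s powr (q-1))"
      by (intro continuous_on_powr' continuous_intros) (use assms in auto)
  qed (auto intro: continuous_intros)
  then show ?thesis unfolding phi_def id_def by simp
qed

lemma phi_abs: "\<bar>phi q s\<bar> = \<bar>s\<bar> powr (q-1)"
  by (simp add: phi_def)

lemma mult_phi: "s * phi q s = psi q s" if "q > 1"
proof -
  have "s * s powr (q-1) = s powr q" if "s > 0" for s
    using that by (simp add: powr_mult_base)
  from this[of s] this[of "-s"] show ?thesis
    by (cases "s = 0") (auto simp: phi_def psi_def abs_if)
qed

lemma phi_pos: "s > 0 \<Longrightarrow> phi q s > 0" by (simp add: phi_def)
lemma phi_zero: "phi q 0 = 0" by (simp add: phi_def)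
lemma phi_le_m1: "s \<le> -1 \<Longrightarrow> q > 1 \<Longrightarrow> phi q s \<le> -1"
  unfolding phi_def using ge_one_powr_ge_zero[of "-s" "q-1"] by auto

lemma phi_strict_mono: assumes "q > 1" "x < y" shows "phi q x < phi q y"
proof -
  have mono2: "a powr (q-1) < b powr (q-1)" if "0 \<le> a" "a < b" for a b
    using powr_less_mono2[of "q-1" a b] that assms by simp
  consider "x \<le> 0" "y \<le> 0" | "x \<le> 0" "y > 0" | "x > 0" by linarith
  then show ?thesis
  proof cases
    case 1 then show ?thesis using mono2[of "-y" "-x"] assms by (simp add: phi_def)
  next
    case 2
    have "phi q x \<le> 0" using 2 by (simp add: phi_def)
    moreover have "0 < phi q y" using 2 by (simp add: phi_def)
    ultimately show ?thesis by linarith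
  next
    case 3 then show ?thesis using mono2[of x y] assms by (simp add: phi_def)
  qed
qed

lemma psi_deriv: assumes q: "q > 1" shows "(psi q has_real_derivative q * phi q s) (at s)"
proof -
  consider "s > 0" | "s < 0" | "s = 0" by linarith
  then show ?thesis
  proof cases
    case 1
    have "((\<lambda>z. z powr q) has_real_derivative q * s powr (q - 1)) (at s)"
      by (rule has_real_derivative_powr[OF 1])
    then have "(psi q has_real_derivative q * s powr (q - 1)) (at s)"
      by (rule has_field_derivative_transform_within_open[where S="{0<..}"]) (use 1 in \<open>auto simp: psi_def\<close>)
    then show ?thesis using 1 by (simp add: phi_def)
  next
    case 2
    have "((\<lambda>z. (-z) powr q) has_real_derivative (q * (-s) powr (q - 1)) * (-1)) (at s)"
      by (rule DERIV_chain2[OF has_real_derivative_powr]) (use 2 in \<open>auto intro!: derivative_eq_intros\<close>)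
    then have "(psi q has_real_derivative (q * (-s) powr (q - 1)) * (-1)) (at s)"
      by (rule has_field_derivative_transform_within_open[where S="{..<0}"]) (use 2 in \<open>auto simp: psi_def\<close>)
    then show ?thesis using 2 by (simp add: phi_def)
  next
    case 3
    have "((\<lambda>h. (psi q (s + h) - psi q s) / h) \<longlongrightarrow> 0) (at 0)"
    proof (rule Lim_null_comparison)
      show "\<forall>\<^sub>F h in at 0. norm ((psi q (s + h) - psi q s) / h) \<le> \<bar>h\<bar> powr (q-1)"
      proof (rule always_eventually, rule allI)
        fix h :: real
        show "norm ((psi q (s + h) - psi q s) / h) \<le> \<bar>h\<bar> powr (q-1)"
          using 3 by (cases "h = 0") (auto simp: psi_def powr_diff abs_divide)
      qed
      have "((\<lambda>h::real. \<bar>h\<bar> powr (q-1)) \<longlongrightarrow> \<bar>0\<bar> powr (q-1)) (at 0)"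
        by (intro tendsto_intros) (use q in auto)
      then show "((\<lambda>h::real. \<bar>h\<bar> powr (q-1)) \<longlongrightarrow> 0) (at 0)" by simp
    qed
    then show ?thesis using 3 by (simp add: DERIV_def phi_zero)
  qed
qed

lemma psi_tangent: assumes q: "q > 1" shows "psi q y \<ge> psi q x + q * phi q x * (y - x)"
proof -
  have pos: "psi q y \<ge> psi q x + q * phi q x * (y - x)" if x: "x > 0" for x y
  proof (cases "y > 0")
    case True
    have d: "((\<lambda>z. z powr q) has_real_derivative q * z powr (q - 1)) (at z)" if "z > 0" for z
      by (rule has_real_derivative_powr[OF that])
    have "y powr q \<ge> x powr q + q * x powr (q-1) * (y - x)"
    proof (cases "x < y")
      case True
      then obtain z where z: "x < z" "z < y" "y powr q - x powr q = (y - x) * (q * z powr (q-1))"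
        using MVT2[of x y "\<lambda>z. z powr q" "\<lambda>z. q * z powr (q-1)"] d x by force
      have "x powr (q-1) \<le> z powr (q-1)" using z x q by (intro powr_mono2) auto
      then have "(y - x) * (q * x powr (q-1)) \<le> (y - x) * (q * z powr (q-1))"
        using True q by (intro mult_left_mono) auto
      then show ?thesis using z(3) by (simp add: algebra_simps)
    next
      case False
      show ?thesis
      proof (cases "x = y")
        case False
        then have yx: "y < x" using \<open>\<not> x < y\<close> by auto
        then obtain z where z: "y < z" "z < x" "x powr q - y powr q = (x - y) * (q * z powr (q-1))"
          using MVT2[of y x "\<lambda>z. z powr q" "\<lambda>z. q * z powr (q-1)"] d \<open>y > 0\<close> by force
        have "z powr (q-1) \<le> x powr (q-1)" using z \<open>y>0\<close> q by (intro powr_mono2) auto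
        then have "(x - y) * (q * z powr (q-1)) \<le> (x - y) * (q * x powr (q-1))"
          using yx q by (intro mult_left_mono) auto
        then show ?thesis using z(3) by (simp add: algebra_simps)
      qed simp
    qed
    then show ?thesis using True x by (simp add: psi_def phi_def)
  next
    case False
    have xq: "x powr q = x * x powr (q-1)" using x powr_mult_base[of x "q-1"] by simp
    have "x powr q + q * x powr (q-1) * (y - x) = x powr (q-1) * ((1-q) * x + q * y)"
      unfolding xq by (simp add: algebra_simps)
    also have "\<dots> \<le> 0"
    proof (rule mult_nonneg_nonpos)
      have "(1-q) * x \<le> 0" using x q by (intro mult_nonpos_nonneg) auto
      moreover have "q * y \<le> 0" using False q by (intro mult_nonneg_nonpos) auto
      ultimately show "(1-q) * x + q * y \<le> 0" by linarith
    qed simp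
    finally have "x powr q + q * x powr (q-1) * (y - x) \<le> 0" .
    moreover have "0 \<le> psi q y" by (simp add: psi_def)
    moreover have "psi q x + q * phi q x * (y - x) = x powr q + q * x powr (q-1) * (y - x)"
      using x by (simp add: phi_def psi_def)
    ultimately show ?thesis by linarith
  qed
  consider "x > 0" | "x < 0" | "x = 0" by linarith
  then show ?thesis
  proof cases
    case 2
    have "psi q (-y) \<ge> psi q (-x) + q * phi q (-x) * (-y - -x)" by (rule pos) (use 2 in auto)
    then show ?thesis using 2 by (simp add: psi_def phi_def algebra_simps)
  next
    case 3 then show ?thesis by (simp add: psi_def phi_zero)
  qed (rule pos)
qed

definition Kf :: "real \<Rightarrow> nat \<Rightarrow> real \<Rightarrow> real \<Rightarrow> real" where
  "Kf \<alpha> n r t = C_const n \<alpha> * (1 - r\<^sup>2) powr (1 + 2*\<alpha>) / (1 - 2*r*t + r\<^sup>2) powr ((real n + 2*\<alpha>)/2)"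

definition Kd :: "real \<Rightarrow> nat \<Rightarrow> real \<Rightarrow> real \<Rightarrow> real" where
  "Kd \<alpha> n r t = (C_const n \<alpha> * ((1 + 2*\<alpha>) * (1 - r\<^sup>2) powr (1 + 2*\<alpha> - 1) * (- (2*r)))
      * (1 - 2*r*t + r\<^sup>2) powr ((real n + 2*\<alpha>)/2)
     - C_const n \<alpha> * (1 - r\<^sup>2) powr (1 + 2*\<alpha>) * (((real n + 2*\<alpha>)/2) * (1 - 2*r*t + r\<^sup>2) powr ((real n + 2*\<alpha>)/2 - 1) * (2*r - 2*t)))
     / ((1 - 2*r*t + r\<^sup>2) powr ((real n + 2*\<alpha>)/2) * (1 - 2*r*t + r\<^sup>2) powr ((real n + 2*\<alpha>)/2))"

lemma den_pos: fixes r t :: real assumes "\<bar>r\<bar> < 1" "\<bar>t\<bar> \<le> 1" shows "1 - 2*r*t + r\<^sup>2 > 0"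
proof -
  have "r * t \<le> \<bar>r\<bar> * \<bar>t\<bar>" by (metis abs_ge_self abs_mult)
  also have "\<dots> \<le> \<bar>r\<bar>" using assms by (simp add: mult_left_le)
  finally have "r * t \<le> \<bar>r\<bar>" .
  moreover have "(1 - \<bar>r\<bar>)\<^sup>2 > 0" using assms by simp
  moreover have "(1 - \<bar>r\<bar>)\<^sup>2 = 1 - 2 * \<bar>r\<bar> + r\<^sup>2" by (simp add: power2_eq_square algebra_simps)
  ultimately show ?thesis by linarith
qed

lemma C_pos: assumes "n \<ge> 1" "\<alpha> > -1/2" shows "C_const n \<alpha> > 0"
proof -
  have "real n \<ge> 1" using assms by simp
  then have "real n / 2 + \<alpha> > 0" using assms by linarith
  moreover have "real n / 2 > 0" using assms by simp
  ultimately show ?thesis unfolding C_const_def using assms by (intro divide_pos_pos mult_pos_pos Gamma_real_pos) auto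
qed

lemma Kf_pos: assumes "C_const n \<alpha> > 0" "\<bar>r\<bar> < 1" "\<bar>t\<bar> \<le> 1" shows "Kf \<alpha> n r t > 0"
proof -
  have "1 - r\<^sup>2 > 0" using assms by (simp add: abs_square_less_1)
  then show ?thesis unfolding Kf_def using assms den_pos[OF assms(2,3)] by simp
qed

lemma Kf_zero: "Kf \<alpha> n 0 t = C_const n \<alpha>" by (simp add: Kf_def)

lemma Kf_deriv: assumes "\<bar>r\<bar> < 1" "\<bar>t\<bar> \<le> 1"
  shows "((\<lambda>r. Kf \<alpha> n r t) has_real_derivative Kd \<alpha> n r t) (at r)"
proof -
  have r2: "1 - r\<^sup>2 > 0" using assms by (simp add: abs_square_less_1)
  have dp: "1 - 2*r*t + r\<^sup>2 > 0" by (rule den_pos[OF assms])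
  have d0: "((\<lambda>r. 1 - r\<^sup>2) has_real_derivative - (2*r)) (at r)"
    by (auto intro!: derivative_eq_intros)
  have d1: "((\<lambda>r. (1 - r\<^sup>2) powr (1 + 2*\<alpha>)) has_real_derivative
      (1 + 2*\<alpha>) * (1 - r\<^sup>2) powr (1 + 2*\<alpha> - 1) * (- (2*r))) (at r)"
    using DERIV_chain2[OF has_real_derivative_powr[OF r2, where r="1 + 2*\<alpha>"] d0] by simp
  have d2: "((\<lambda>r. 1 - 2*r*t + r\<^sup>2) has_real_derivative 2*r - 2*t) (at r)"
    by (auto intro!: derivative_eq_intros)
  have d3: "((\<lambda>r. (1 - 2*r*t + r\<^sup>2) powr ((real n + 2*\<alpha>)/2)) has_real_derivative
      ((real n + 2*\<alpha>)/2) * (1 - 2*r*t + r\<^sup>2) powr ((real n + 2*\<alpha>)/2 - 1) * (2*r - 2*t)) (at r)"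
    using DERIV_chain2[OF has_real_derivative_powr[OF dp, where r="(real n + 2*\<alpha>)/2"] d2] by simp
  show ?thesis
    unfolding Kf_def Kd_def
    by (rule DERIV_divide[OF DERIV_cmult[OF d1] d3]) (use dp in simp)
qed

lemma Kf_cont: "continuous_on ({-1<..<1} \<times> {-1..1}) (\<lambda>z. Kf \<alpha> n (fst z) (snd z))"
proof -
  have "\<forall>z\<in>{-1<..<1::real} \<times> {-1..1::real}. 1 - 2 * fst z * snd z + (fst z)\<^sup>2 \<noteq> 0"
  proof
    fix z :: "real \<times> real" assume "z \<in> {-1<..<1} \<times> {-1..1}"
    then have "\<bar>fst z\<bar> < 1" "\<bar>snd z\<bar> \<le> 1" by auto
    from den_pos[OF this] show "1 - 2 * fst z * snd z + (fst z)\<^sup>2 \<noteq> 0" by simp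
  qed
  moreover have "\<forall>z\<in>{-1<..<1::real} \<times> {-1..1::real}. 1 - (fst z)\<^sup>2 \<noteq> 0"
  proof
    fix z :: "real \<times> real" assume "z \<in> {-1<..<1} \<times> {-1..1}"
    then have "\<bar>fst z\<bar> < 1" by auto
    then have "(fst z)\<^sup>2 < 1" by (simp add: abs_square_less_1)
    then show "1 - (fst z)\<^sup>2 \<noteq> 0" by simp
  qed
  ultimately show ?thesis unfolding Kf_def
    by (intro continuous_on_divide continuous_on_mult continuous_on_const continuous_on_powr continuous_on_diff continuous_on_add continuous_on_power continuous_on_fst continuous_on_snd continuous_on_id) auto
qed

lemma Kd_cont: "continuous_on ({-1<..<1} \<times> {-1..1}) (\<lambda>z. Kd \<alpha> n (fst z) (snd z))"
proof -
  have "\<forall>z\<in>{-1<..<1::real} \<times> {-1..1::real}. 1 - 2 * fst z * snd z + (fst z)\<^sup>2 \<noteq> 0"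
  proof
    fix z :: "real \<times> real" assume "z \<in> {-1<..<1} \<times> {-1..1}"
    then have "\<bar>fst z\<bar> < 1" "\<bar>snd z\<bar> \<le> 1" by auto
    from den_pos[OF this] show "1 - 2 * fst z * snd z + (fst z)\<^sup>2 \<noteq> 0" by simp
  qed
  moreover have "\<forall>z\<in>{-1<..<1::real} \<times> {-1..1::real}. 1 - (fst z)\<^sup>2 \<noteq> 0"
  proof
    fix z :: "real \<times> real" assume "z \<in> {-1<..<1} \<times> {-1..1}"
    then have "\<bar>fst z\<bar> < 1" by auto
    then have "(fst z)\<^sup>2 < 1" by (simp add: abs_square_less_1)
    then show "1 - (fst z)\<^sup>2 \<noteq> 0" by simp
  qed
  ultimately show ?thesis unfolding Kd_def
    by (intro continuous_on_divide continuous_on_mult continuous_on_const continuous_on_powr continuous_on_diff continuous_on_add continuous_on_power continuous_on_fst continuous_on_snd continuous_on_id continuous_on_minus) auto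
qed

lemma Kf_ends: assumes "C_const n \<alpha> > 0" "0 < \<bar>r\<bar>" "\<bar>r\<bar> < 1" "real n + 2*\<alpha> > 0"
  shows "Kf \<alpha> n r 1 \<noteq> Kf \<alpha> n r (-1)"
proof
  assume eq: "Kf \<alpha> n r 1 = Kf \<alpha> n r (-1)"
  have "r\<^sup>2 < 1" using assms by (simp add: abs_square_less_1)
  then have r2: "(1 - r\<^sup>2) powr (1 + 2*\<alpha>) > 0" by simp
  have a: "1 - 2*r*1 + r\<^sup>2 > 0" "1 - 2*r*(-1) + r\<^sup>2 > 0" using den_pos[of r 1] den_pos[of r "-1"] assms by auto
  from eq have "(1 - 2*r*1 + r\<^sup>2) powr ((real n + 2*\<alpha>)/2) = (1 - 2*r*(-1) + r\<^sup>2) powr ((real n + 2*\<alpha>)/2)"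
    using assms r2 a unfolding Kf_def by (simp add: divide_simps)
  moreover have g: "(real n + 2*\<alpha>)/2 > 0" using assms by simp
  ultimately have "1 - 2*r*1 + r\<^sup>2 = 1 - 2*r*(-1) + r\<^sup>2"
  proof -
    assume E: "(1 - 2*r*1 + r\<^sup>2) powr ((real n + 2*\<alpha>)/2) = (1 - 2*r*(-1) + r\<^sup>2) powr ((real n + 2*\<alpha>)/2)"
    define X where "X = 1 - 2*r*1 + r\<^sup>2"
    define Y where "Y = 1 - 2*r*(-1) + r\<^sup>2"
    have XY: "X > 0" "Y > 0" using a by (simp_all add: X_def Y_def)
    have E': "X powr ((real n + 2*\<alpha>)/2) = Y powr ((real n + 2*\<alpha>)/2)" using E by (simp add: X_def Y_def)
    have "\<not> X < Y" using powr_less_mono2[OF g, of X Y] XY E' by auto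
    moreover have "\<not> Y < X" using powr_less_mono2[OF g, of Y X] XY E' by auto
    ultimately show ?thesis unfolding X_def[symmetric] Y_def[symmetric] by simp
  qed
  then show False using assms by simp
qed

lemma norm_pow_powr: "(x::real) \<ge> 0 \<Longrightarrow> x powr g = (x\<^sup>2) powr (g/2)"
proof (cases "x = 0")
  case False
  assume "x \<ge> 0"
  then have x: "x > 0" using False by simp
  have "x\<^sup>2 = x powr 2" using powr_realpow[OF x, of 2] by simp
  then have "(x\<^sup>2) powr (g/2) = x powr (2 * (g/2))" by (simp add: powr_powr)
  then show ?thesis by simp
qed simp

lemma P_Kf:
  fixes e \<eta> :: "real^'n"
  assumes e: "norm e = 1" and eta: "norm \<eta> = 1"
  shows "P_kernel \<alpha> (r *\<^sub>R e) \<eta> = Kf \<alpha> CARD('n) r (\<eta> \<bullet> e)"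
proof -
  have ee: "e \<bullet> e = 1" using e by (simp add: norm_eq_1)
  have hh: "\<eta> \<bullet> \<eta> = 1" using eta by (simp add: norm_eq_1)
  have "(norm (r *\<^sub>R e - \<eta>))\<^sup>2 = (r *\<^sub>R e - \<eta>) \<bullet> (r *\<^sub>R e - \<eta>)"
    by (rule power2_norm_eq_inner)
  also have "\<dots> = r * r * (e \<bullet> e) - 2 * r * (\<eta> \<bullet> e) + \<eta> \<bullet> \<eta>"
    by (simp add: inner_diff_left inner_diff_right inner_commute[of e \<eta>] algebra_simps)
  also have "\<dots> = 1 - 2*r*(\<eta> \<bullet> e) + r\<^sup>2" using ee hh by (simp add: power2_eq_square)
  finally have n2: "(norm (r *\<^sub>R e - \<eta>))\<^sup>2 = 1 - 2*r*(\<eta> \<bullet> e) + r\<^sup>2" .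
  have n1: "norm (r *\<^sub>R e) ^ 2 = r\<^sup>2" using e by (simp add: power_mult_distrib)
  have "norm (r *\<^sub>R e - \<eta>) powr (real CARD('n) + 2 * \<alpha>)
      = (1 - 2*r*(\<eta> \<bullet> e) + r\<^sup>2) powr ((real CARD('n) + 2 * \<alpha>)/2)"
    using norm_pow_powr[of "norm (r *\<^sub>R e - \<eta>)" "real CARD('n) + 2 * \<alpha>"] n2 by simp
  then show ?thesis unfolding P_kernel_def Kf_def n1 by simp
qed

locale kset =
  fixes \<alpha> q :: real and n :: nat and e :: "'a::euclidean_space"
  assumes q1: "q > 1" and alpha: "\<alpha> > -1/2" and n1: "n \<ge> 1" and e1: "norm e = 1"
begin

definition Phi :: "real \<Rightarrow> real \<Rightarrow> real" where
  "Phi r a = (\<integral>\<eta>. psi q (Kf \<alpha> n r (\<eta> \<bullet> e) - a) \<partial>(sphere_sigma::'a measure))"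
definition Psi :: "real \<Rightarrow> real \<Rightarrow> real" where
  "Psi r a = (\<integral>\<eta>. phi q (Kf \<alpha> n r (\<eta> \<bullet> e) - a) \<partial>(sphere_sigma::'a measure))"
definition Phir :: "real \<Rightarrow> real \<Rightarrow> real" where
  "Phir r a = (\<integral>\<eta>. q * phi q (Kf \<alpha> n r (\<eta> \<bullet> e) - a) * Kd \<alpha> n r (\<eta> \<bullet> e) \<partial>(sphere_sigma::'a measure))"

lemma Cpos: "C_const n \<alpha> > 0" using C_pos n1 alpha by blast

lemma dot_e: "\<eta> \<in> sphere (0::'a) 1 \<Longrightarrow> \<bar>\<eta> \<bullet> e\<bar> \<le> 1"
  using Cauchy_Schwarz_ineq2[of \<eta> e] e1 by simp

abbreviation "I \<equiv> {-1<..<1::real}"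

lemma dot_e2: "norm (\<eta>::'a) = 1 \<Longrightarrow> -1 \<le> \<eta> \<bullet> e \<and> \<eta> \<bullet> e \<le> 1"
  using dot_e[of \<eta>] by (simp add: abs_le_iff)

lemma K_cont3: "continuous_on ((I \<times> (UNIV::real set)) \<times> sphere (0::'a) 1) (\<lambda>z. Kf \<alpha> n (fst (fst z)) (snd z \<bullet> e))"
  and Kd_cont3: "continuous_on ((I \<times> (UNIV::real set)) \<times> sphere (0::'a) 1) (\<lambda>z. Kd \<alpha> n (fst (fst z)) (snd z \<bullet> e))"
proof -
  let ?S = "(I \<times> (UNIV::real set)) \<times> sphere (0::'a) 1"
  have c: "continuous_on ?S (\<lambda>z. (fst (fst z), snd z \<bullet> e))" by (intro continuous_intros)
  have im: "(\<lambda>z. (fst (fst z), snd z \<bullet> e)) ` ?S \<subseteq> I \<times> {-1..1}" using dot_e2 by auto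
  from continuous_on_compose2[OF Kf_cont[of \<alpha> n] c im]
  show "continuous_on ?S (\<lambda>z. Kf \<alpha> n (fst (fst z)) (snd z \<bullet> e))" by simp
  from continuous_on_compose2[OF Kd_cont[of \<alpha> n] c im]
  show "continuous_on ?S (\<lambda>z. Kd \<alpha> n (fst (fst z)) (snd z \<bullet> e))" by simp
qed

lemma K_cont2: "continuous_on (I \<times> sphere (0::'a) 1) (\<lambda>z. Kf \<alpha> n (fst z) (snd z \<bullet> e))"
  and Kd_cont2: "continuous_on (I \<times> sphere (0::'a) 1) (\<lambda>z. Kd \<alpha> n (fst z) (snd z \<bullet> e))"
proof -
  let ?S = "I \<times> sphere (0::'a) 1"
  have c: "continuous_on ?S (\<lambda>z. (fst z, snd z \<bullet> e))" by (intro continuous_intros)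
  have im: "(\<lambda>z. (fst z, snd z \<bullet> e)) ` ?S \<subseteq> I \<times> {-1..1}" using dot_e2 by auto
  from continuous_on_compose2[OF Kf_cont[of \<alpha> n] c im]
  show "continuous_on ?S (\<lambda>z. Kf \<alpha> n (fst z) (snd z \<bullet> e))" by simp
  from continuous_on_compose2[OF Kd_cont[of \<alpha> n] c im]
  show "continuous_on ?S (\<lambda>z. Kd \<alpha> n (fst z) (snd z \<bullet> e))" by simp
qed

lemma K_cont1: "r \<in> I \<Longrightarrow> continuous_on (sphere (0::'a) 1) (\<lambda>\<eta>. Kf \<alpha> n r (\<eta> \<bullet> e))"
  and Kd_cont1: "r \<in> I \<Longrightarrow> continuous_on (sphere (0::'a) 1) (\<lambda>\<eta>. Kd \<alpha> n r (\<eta> \<bullet> e))"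
proof -
  assume r: "r \<in> I"
  have c: "continuous_on (sphere (0::'a) 1) (\<lambda>\<eta>. (r, \<eta>))" by (intro continuous_intros)
  have im: "(\<lambda>\<eta>. (r, \<eta>)) ` sphere (0::'a) 1 \<subseteq> I \<times> sphere 0 1" using r by auto
  from continuous_on_compose2[OF K_cont2 c im]
  show "continuous_on (sphere (0::'a) 1) (\<lambda>\<eta>. Kf \<alpha> n r (\<eta> \<bullet> e))" by simp
  from continuous_on_compose2[OF Kd_cont2 c im]
  show "continuous_on (sphere (0::'a) 1) (\<lambda>\<eta>. Kd \<alpha> n r (\<eta> \<bullet> e))" by simp
qed

lemma psiK_cont1: "r \<in> I \<Longrightarrow> continuous_on (sphere (0::'a) 1) (\<lambda>\<eta>. psi q (Kf \<alpha> n r (\<eta> \<bullet> e) - a))"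
  and phiK_cont1: "r \<in> I \<Longrightarrow> continuous_on (sphere (0::'a) 1) (\<lambda>\<eta>. phi q (Kf \<alpha> n r (\<eta> \<bullet> e) - a))"
  and phirK_cont1: "r \<in> I \<Longrightarrow> continuous_on (sphere (0::'a) 1) (\<lambda>\<eta>. q * phi q (Kf \<alpha> n r (\<eta> \<bullet> e) - a) * Kd \<alpha> n r (\<eta> \<bullet> e))"
proof -
  assume r: "r \<in> I"
  have c: "continuous_on (sphere (0::'a) 1) (\<lambda>\<eta>. Kf \<alpha> n r (\<eta> \<bullet> e) - a)"
    by (intro continuous_intros K_cont1 r)
  show "continuous_on (sphere (0::'a) 1) (\<lambda>\<eta>. psi q (Kf \<alpha> n r (\<eta> \<bullet> e) - a))"
    using continuous_on_compose2[OF psi_cont c] q1 by simp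
  have p: "continuous_on (sphere (0::'a) 1) (\<lambda>\<eta>. phi q (Kf \<alpha> n r (\<eta> \<bullet> e) - a))"
    using continuous_on_compose2[OF phi_cont c] q1 by simp
  then show "continuous_on (sphere (0::'a) 1) (\<lambda>\<eta>. phi q (Kf \<alpha> n r (\<eta> \<bullet> e) - a))" .
  show "continuous_on (sphere (0::'a) 1) (\<lambda>\<eta>. q * phi q (Kf \<alpha> n r (\<eta> \<bullet> e) - a) * Kd \<alpha> n r (\<eta> \<bullet> e))"
    by (intro continuous_on_mult continuous_on_const p Kd_cont1 r)
qed

lemma int_psi: "r \<in> I \<Longrightarrow> integrable (sphere_sigma::'a measure) (\<lambda>\<eta>. psi q (Kf \<alpha> n r (\<eta> \<bullet> e) - a))"
  and int_phi: "r \<in> I \<Longrightarrow> integrable (sphere_sigma::'a measure) (\<lambda>\<eta>. phi q (Kf \<alpha> n r (\<eta> \<bullet> e) - a))"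
  using ss_int_cont psiK_cont1 phiK_cont1 by blast+

lemma Psi_cont: "continuous_on (I \<times> UNIV) (\<lambda>x. Psi (fst x) (snd x))"
proof -
  let ?S = "(I \<times> (UNIV::real set)) \<times> sphere (0::'a) 1"
  have c: "continuous_on ?S (\<lambda>z. Kf \<alpha> n (fst (fst z)) (snd z \<bullet> e) - snd (fst z))"
    by (intro continuous_intros K_cont3)
  have "continuous_on ?S (\<lambda>z. phi q (Kf \<alpha> n (fst (fst z)) (snd z \<bullet> e) - snd (fst z)))"
    using continuous_on_compose2[OF phi_cont c] q1 by simp
  then have "continuous_on ?S (\<lambda>(x,\<eta>). phi q (Kf \<alpha> n (fst x) (\<eta> \<bullet> e) - snd x))"
    by (simp add: case_prod_unfold)
  from ss_integral_cont[OF this] show ?thesis unfolding Psi_def .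
qed

lemma Phir_cont: "continuous_on (I \<times> UNIV) (\<lambda>x. Phir (fst x) (snd x))"
proof -
  let ?S = "(I \<times> (UNIV::real set)) \<times> sphere (0::'a) 1"
  have c: "continuous_on ?S (\<lambda>z. Kf \<alpha> n (fst (fst z)) (snd z \<bullet> e) - snd (fst z))"
    by (intro continuous_intros K_cont3)
  have "continuous_on ?S (\<lambda>z. phi q (Kf \<alpha> n (fst (fst z)) (snd z \<bullet> e) - snd (fst z)))"
    using continuous_on_compose2[OF phi_cont c] q1 by simp
  then have "continuous_on ?S (\<lambda>z. q * phi q (Kf \<alpha> n (fst (fst z)) (snd z \<bullet> e) - snd (fst z)) * Kd \<alpha> n (fst (fst z)) (snd z \<bullet> e))"
    by (intro continuous_on_mult continuous_on_const Kd_cont3)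
  then have "continuous_on ?S (\<lambda>(x,\<eta>). q * phi q (Kf \<alpha> n (fst x) (\<eta> \<bullet> e) - snd x) * Kd \<alpha> n (fst x) (\<eta> \<bullet> e))"
    by (simp add: case_prod_unfold)
  from ss_integral_cont[OF this] show ?thesis unfolding Phir_def .
qed

lemma Phi_deriv: "r \<in> I \<Longrightarrow> ((\<lambda>r. Phi r a) has_real_derivative Phir r a) (at r)"
  unfolding Phi_def Phir_def
proof (rule ss_integral_deriv[where I=I])
  show "open I" by simp
  have c: "continuous_on (I \<times> sphere (0::'a) 1) (\<lambda>z. Kf \<alpha> n (fst z) (snd z \<bullet> e) - a)"
    by (intro continuous_intros K_cont2)
  have "continuous_on (I \<times> sphere (0::'a) 1) (\<lambda>z. phi q (Kf \<alpha> n (fst z) (snd z \<bullet> e) - a))"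
    using continuous_on_compose2[OF phi_cont c] q1 by simp
  then have "continuous_on (I \<times> sphere (0::'a) 1) (\<lambda>z. q * phi q (Kf \<alpha> n (fst z) (snd z \<bullet> e) - a) * Kd \<alpha> n (fst z) (snd z \<bullet> e))"
    by (intro continuous_on_mult continuous_on_const Kd_cont2)
  then show "continuous_on (I \<times> sphere (0::'a) 1) (\<lambda>(s,\<eta>). q * phi q (Kf \<alpha> n s (\<eta> \<bullet> e) - a) * Kd \<alpha> n s (\<eta> \<bullet> e))"
    by (simp add: case_prod_unfold)
  show "continuous_on (sphere 0 1) (\<lambda>\<eta>. psi q (Kf \<alpha> n s (\<eta> \<bullet> e) - a))" if "s \<in> I" for s
    by (rule psiK_cont1[OF that])
  show "((\<lambda>s. psi q (Kf \<alpha> n s (\<eta> \<bullet> e) - a)) has_real_derivative q * phi q (Kf \<alpha> n s (\<eta> \<bullet> e) - a) * Kd \<alpha> n s (\<eta> \<bullet> e)) (at s)"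
    if "s \<in> I" "\<eta> \<in> sphere 0 1" for s \<eta>
  proof -
    have t: "\<bar>\<eta> \<bullet> e\<bar> \<le> 1" by (rule dot_e[OF that(2)])
    have "\<bar>s\<bar> < 1" using that by auto
    from Kf_deriv[OF this t] have "((\<lambda>s. Kf \<alpha> n s (\<eta> \<bullet> e) - a) has_real_derivative Kd \<alpha> n s (\<eta> \<bullet> e)) (at s)"
      by (auto intro!: derivative_eq_intros)
    from DERIV_chain2[OF psi_deriv[OF q1] this] show ?thesis by simp
  qed
qed (simp)

end

context kset begin

lemma ss_space_ne: "emeasure (sphere_sigma::'a measure) (space sphere_sigma) \<noteq> 0"
  by (simp add: ss_space ss_space1)

lemma Psi_strict: assumes r: "r \<in> I" and ab: "a < b" shows "Psi r b < Psi r a"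
  unfolding Psi_def
proof (rule finite_measure.integral_less_AE_space[OF ss_finite int_phi[OF r] int_phi[OF r] _ ss_space_ne])
  show "AE \<eta> in sphere_sigma. phi q (Kf \<alpha> n r (\<eta> \<bullet> e) - b) < phi q (Kf \<alpha> n r (\<eta> \<bullet> e) - a)"
    by (rule AE_I2) (rule phi_strict_mono[OF q1], use ab in simp)
qed

lemma Psi_inj: assumes r: "r \<in> I" and "Psi r a = Psi r b" shows "a = b"
  using Psi_strict[OF r, of a b] Psi_strict[OF r, of b a] assms(2) by (cases a b rule: linorder_cases) auto

lemma K_pos: "r \<in> I \<Longrightarrow> \<eta> \<in> sphere (0::'a) 1 \<Longrightarrow> Kf \<alpha> n r (\<eta> \<bullet> e) > 0"
  using Kf_pos[OF Cpos, of r "\<eta> \<bullet> e"] dot_e[of \<eta>] by auto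

lemma Psi0: assumes r: "r \<in> I" shows "Psi r 0 > 0"
proof -
  have "(\<integral>\<eta>. 0 \<partial>(sphere_sigma::'a measure)) < Psi r 0"
    unfolding Psi_def
  proof (rule finite_measure.integral_less_AE_space[OF ss_finite _ int_phi[OF r] _ ss_space_ne])
    show "AE \<eta> in sphere_sigma. 0 < phi q (Kf \<alpha> n r (\<eta> \<bullet> e) - 0)"
      by (rule AE_I2) (auto simp: ss_space intro!: phi_pos K_pos[OF r])
  qed simp
  then show ?thesis by simp
qed

lemma PsiB: assumes r: "r \<in> I" obtains B where "B > 0" "Psi r B < 0"
proof -
  obtain B where B: "\<And>\<eta>. \<eta> \<in> sphere (0::'a) 1 \<Longrightarrow> norm (Kf \<alpha> n r (\<eta> \<bullet> e)) \<le> B"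
    using cont_bound[OF compact_sphere K_cont1[OF r]] by blast
  have B0: "B \<ge> 0" using B[of e] e1 by (smt (verit) norm_ge_zero mem_sphere_0)
  have "Psi r (B + 1) \<le> (\<integral>\<eta>. -1 \<partial>(sphere_sigma::'a measure))"
    unfolding Psi_def
  proof (rule integral_mono)
    show "integrable sphere_sigma (\<lambda>\<eta>::'a. -1::real)" by (rule finite_measure.integrable_const[OF ss_finite])
    fix \<eta> :: 'a assume "\<eta> \<in> space sphere_sigma"
    then have "Kf \<alpha> n r (\<eta> \<bullet> e) \<le> B" using B[of \<eta>] by (simp add: ss_space)
    then show "phi q (Kf \<alpha> n r (\<eta> \<bullet> e) - (B + 1)) \<le> -1" by (intro phi_le_m1 q1) simp
  qed (rule int_phi[OF r])
  also have "\<dots> = -1" by (simp add: ss_measure1 ss_space)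
  finally show ?thesis using B0 by (intro that[of "B+1"]) auto
qed

definition Amin :: "real \<Rightarrow> real" where "Amin r = (THE a. Psi r a = 0)"

lemma Psi_cont_a: "r \<in> I \<Longrightarrow> continuous_on UNIV (Psi r)"
proof -
  assume r: "r \<in> I"
  have c: "continuous_on UNIV (\<lambda>a::real. (r, a))" by (intro continuous_intros)
  have im: "(\<lambda>a::real. (r, a)) ` UNIV \<subseteq> I \<times> UNIV" using r by auto
  from continuous_on_compose2[OF Psi_cont c im] show ?thesis by simp
qed

lemma Amin: assumes r: "r \<in> I" shows "Psi r (Amin r) = 0" "Amin r > 0"
proof -
  obtain B where B: "B > 0" "Psi r B < 0" using PsiB[OF r] by blast
  obtain a where a: "0 \<le> a" "a \<le> B" "Psi r a = 0"
    using IVT2'[of "Psi r" B 0 0] B Psi0[OF r] continuous_on_subset[OF Psi_cont_a[OF r]] by force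
  have "Amin r = a" unfolding Amin_def
    by (rule the_equality[where P="\<lambda>a. Psi r a = 0", OF a(3)]) (use Psi_inj[OF r] a(3) in auto)
  then show "Psi r (Amin r) = 0" using a by simp
  show "Amin r > 0"
  proof (rule ccontr)
    assume "\<not> Amin r > 0"
    then have "Amin r \<le> 0" by simp
    then have "Psi r 0 \<le> Psi r (Amin r)" using Psi_strict[OF r, of "Amin r" 0] by (cases "Amin r = 0") auto
    then show False using Psi0[OF r] \<open>Psi r (Amin r) = 0\<close> by simp
  qed
qed

lemma Phi_min: assumes r: "r \<in> I" shows "Phi r (Amin r) \<le> Phi r b"
proof -
  let ?A = "Amin r"
  have "(\<integral>\<eta>. psi q (Kf \<alpha> n r (\<eta> \<bullet> e) - ?A) + (q * (?A - b)) * phi q (Kf \<alpha> n r (\<eta> \<bullet> e) - ?A) \<partial>(sphere_sigma::'a measure))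
      \<le> Phi r b"
    unfolding Phi_def
  proof (rule integral_mono)
    show "integrable sphere_sigma (\<lambda>\<eta>::'a. psi q (Kf \<alpha> n r (\<eta> \<bullet> e) - ?A) + (q * (?A - b)) * phi q (Kf \<alpha> n r (\<eta> \<bullet> e) - ?A))"
      by (rule Bochner_Integration.integrable_add[OF int_psi[OF r] integrable_mult_right[OF int_phi[OF r]]])
    show "integrable sphere_sigma (\<lambda>\<eta>::'a. psi q (Kf \<alpha> n r (\<eta> \<bullet> e) - b))" by (rule int_psi[OF r])
    fix \<eta> :: 'a
    have "psi q (Kf \<alpha> n r (\<eta> \<bullet> e) - b) \<ge> psi q (Kf \<alpha> n r (\<eta> \<bullet> e) - ?A) + q * phi q (Kf \<alpha> n r (\<eta> \<bullet> e) - ?A) * ((Kf \<alpha> n r (\<eta> \<bullet> e) - b) - (Kf \<alpha> n r (\<eta> \<bullet> e) - ?A))"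
      by (rule psi_tangent[OF q1])
    then show "psi q (Kf \<alpha> n r (\<eta> \<bullet> e) - ?A) + (q * (?A - b)) * phi q (Kf \<alpha> n r (\<eta> \<bullet> e) - ?A) \<le> psi q (Kf \<alpha> n r (\<eta> \<bullet> e) - b)"
      by (simp add: algebra_simps)
  qed
  also have "(\<integral>\<eta>. psi q (Kf \<alpha> n r (\<eta> \<bullet> e) - ?A) + (q * (?A - b)) * phi q (Kf \<alpha> n r (\<eta> \<bullet> e) - ?A) \<partial>(sphere_sigma::'a measure))
     = Phi r ?A + (q * (?A - b)) * Psi r ?A"
    unfolding Phi_def Psi_def
    by (subst Bochner_Integration.integral_add[OF int_psi[OF r] integrable_mult_right[OF int_phi[OF r]]]) simp
  finally show ?thesis using Amin(1)[OF r] by simp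
qed

lemma Phi_nonneg: "Phi r a \<ge> 0"
  unfolding Phi_def by (rule integral_nonneg_AE) (simp add: psi_def)

definition m :: "real \<Rightarrow> real" where "m r = Phi r (Amin r)"

lemma m0: "m 0 = 0"
proof -
  have "m 0 \<le> Phi 0 (C_const n \<alpha>)" unfolding m_def by (rule Phi_min) simp
  also have "Phi 0 (C_const n \<alpha>) = 0" unfolding Phi_def by (simp add: Kf_zero psi_def)
  finally show ?thesis using Phi_nonneg[of 0 "Amin 0"] unfolding m_def by simp
qed

end

context kset begin

lemma Psi_cont_r: "isCont (\<lambda>r. Psi r c) r0" if r0: "r0 \<in> I" for c r0
proof -
  have cc: "continuous_on I (\<lambda>r::real. (r, c))" by (intro continuous_intros)
  have im: "(\<lambda>r::real. (r, c)) ` I \<subseteq> I \<times> UNIV" by auto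
  from continuous_on_compose2[OF Psi_cont cc im] have "continuous_on I (\<lambda>r. Psi r c)" by simp
  moreover have "open I" by simp
  ultimately have "\<forall>x\<in>I. isCont (\<lambda>r. Psi r c) x" using continuous_on_eq_continuous_at by blast
  then show ?thesis using r0 by blast
qed

lemma Amin_cont: assumes r0: "r0 \<in> I" shows "isCont Amin r0"
  unfolding isCont_def tendsto_iff
proof (intro allI impI)
  fix \<epsilon> :: real assume \<epsilon>: "\<epsilon> > 0"
  define A0 where "A0 = Amin r0"
  have p1: "Psi r0 (A0 - \<epsilon>) > 0" using Psi_strict[OF r0, of "A0 - \<epsilon>" A0] Amin(1)[OF r0] \<epsilon> by (simp add: A0_def)
  have p2: "Psi r0 (A0 + \<epsilon>) < 0" using Psi_strict[OF r0, of A0 "A0 + \<epsilon>"] Amin(1)[OF r0] \<epsilon> by (simp add: A0_def)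
  have ev1: "eventually (\<lambda>r. 0 < Psi r (A0 - \<epsilon>)) (at r0)"
    using order_tendstoD(1)[OF Psi_cont_r[OF r0, of "A0 - \<epsilon>", unfolded isCont_def] p1] .
  have ev2: "eventually (\<lambda>r. Psi r (A0 + \<epsilon>) < 0) (at r0)"
    using order_tendstoD(2)[OF Psi_cont_r[OF r0, of "A0 + \<epsilon>", unfolded isCont_def] p2] .
  have ev3: "eventually (\<lambda>r. r \<in> I) (at r0)" by (rule eventually_at_in_open') (use r0 in auto)
  show "eventually (\<lambda>r. dist (Amin r) (Amin r0) < \<epsilon>) (at r0)"
    using ev1 ev2 ev3
  proof eventually_elim
    case (elim r)
    have lo: "A0 - \<epsilon> < Amin r"
    proof (rule ccontr)
      assume "\<not> A0 - \<epsilon> < Amin r"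
      then have "Psi r (A0 - \<epsilon>) \<le> Psi r (Amin r)"
        using Psi_strict[OF elim(3), of "Amin r" "A0 - \<epsilon>"] by (cases "Amin r = A0 - \<epsilon>") auto
      then show False using elim(1) Amin(1)[OF elim(3)] by simp
    qed
    have hi: "Amin r < A0 + \<epsilon>"
    proof (rule ccontr)
      assume "\<not> Amin r < A0 + \<epsilon>"
      then have "Psi r (Amin r) \<le> Psi r (A0 + \<epsilon>)"
        using Psi_strict[OF elim(3), of "A0 + \<epsilon>" "Amin r"] by (cases "Amin r = A0 + \<epsilon>") auto
      then show False using elim(2) Amin(1)[OF elim(3)] by simp
    qed
    show ?case using lo hi by (simp add: A0_def dist_real_def abs_less_iff)
  qed
qed

lemma mean_Phi:
  assumes y: "y \<in> I" and r0: "r0 \<in> I" and ne: "y \<noteq> r0"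
  obtains \<xi> where "\<xi> \<in> I" "\<bar>\<xi> - r0\<bar> < \<bar>y - r0\<bar>" "Phi y b - Phi r0 b = (y - r0) * Phir \<xi> b"
proof (cases "y < r0")
  case True
  obtain z where z: "y < z" "z < r0" "Phi r0 b - Phi y b = (r0 - y) * Phir z b"
    using MVT2[of y r0 "\<lambda>s. Phi s b" "\<lambda>s. Phir s b"] True Phi_deriv y r0 by force
  show ?thesis by (rule that[of z]) (use z y r0 in \<open>auto simp: algebra_simps\<close>)
next
  case False
  then have yr: "r0 < y" using ne by simp
  obtain z where z: "r0 < z" "z < y" "Phi y b - Phi r0 b = (y - r0) * Phir z b"
    using MVT2[of r0 y "\<lambda>s. Phi s b" "\<lambda>s. Phir s b"] yr Phi_deriv y r0 by force
  show ?thesis by (rule that[of z]) (use z y r0 in \<open>auto simp: algebra_simps\<close>)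
qed

lemma between_close:
  fixes Q L U D \<epsilon> :: real
  assumes "(L \<le> Q \<and> Q \<le> U) \<or> (U \<le> Q \<and> Q \<le> L)" "\<bar>L - D\<bar> < \<epsilon>" "\<bar>U - D\<bar> < \<epsilon>"
  shows "\<bar>Q - D\<bar> < \<epsilon>"
  using assms by (auto simp: abs_less_iff)

lemma m_deriv: assumes r0: "r0 \<in> I" shows "(m has_real_derivative Phir r0 (Amin r0)) (at r0)"
proof -
  define A0 where "A0 = Amin r0"
  define D where "D = Phir r0 A0"
  have "((\<lambda>y. (m y - m r0) / (y - r0)) \<longlongrightarrow> D) (at r0)"
    unfolding tendsto_iff
  proof (intro allI impI)
    fix \<epsilon> :: real assume \<epsilon>: "\<epsilon> > 0"
    have U: "((\<lambda>y. (Phi y A0 - Phi r0 A0) / (y - r0)) \<longlongrightarrow> D) (at r0)"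
      using Phi_deriv[OF r0, of A0] unfolding has_field_derivative_iff D_def .
    then have evU: "eventually (\<lambda>y. dist ((Phi y A0 - Phi r0 A0) / (y - r0)) D < \<epsilon>) (at r0)"
      using \<epsilon> unfolding tendsto_iff by blast
    have "(r0, A0) \<in> I \<times> UNIV" using r0 by simp
    from Phir_cont[unfolded continuous_on_iff, rule_format, OF this \<epsilon>]
    obtain \<delta> where \<delta>: "\<delta> > 0" "\<And>z. z \<in> I \<times> UNIV \<Longrightarrow> dist z (r0, A0) < \<delta> \<Longrightarrow> dist (Phir (fst z) (snd z)) D < \<epsilon>"
      unfolding D_def by auto
    have "\<delta>/2 > 0" using \<delta>(1) by simp
    then have evA: "eventually (\<lambda>y. dist (Amin y) A0 < \<delta>/2) (at r0)"
      using Amin_cont[OF r0] unfolding isCont_def tendsto_iff A0_def by blast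
    have evR: "eventually (\<lambda>y. dist y r0 < \<delta>/2) (at r0)"
      unfolding eventually_at by (rule exI[of _ "\<delta>/2"]) (use \<delta> in auto)
    have evI: "eventually (\<lambda>y. y \<in> I - {r0}) (at r0)" by (rule eventually_at_in_open) (use r0 in auto)
    show "eventually (\<lambda>y. dist ((m y - m r0) / (y - r0)) D < \<epsilon>) (at r0)"
      using evU evA evR evI
    proof eventually_elim
      case (elim y)
      define Ay where "Ay = Amin y"
      have yI: "y \<in> I" and ne: "y \<noteq> r0" using elim(4) by auto
      obtain \<xi> where \<xi>: "\<xi> \<in> I" "\<bar>\<xi> - r0\<bar> < \<bar>y - r0\<bar>" "Phi y Ay - Phi r0 Ay = (y - r0) * Phir \<xi> Ay"
        using mean_Phi[OF yI r0 ne] by blast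
      have "dist (\<xi>, Ay) (r0, A0) \<le> \<bar>\<xi> - r0\<bar> + \<bar>Ay - A0\<bar>"
        unfolding dist_Pair_Pair dist_real_def using sqrt_sum_squares_le_sum_abs by simp
      also have "\<dots> < \<delta>/2 + \<delta>/2" using \<xi>(2) elim(2,3) by (simp add: Ay_def dist_real_def)
      finally have L: "\<bar>Phir \<xi> Ay - D\<bar> < \<epsilon>" using \<delta>(2)[of "(\<xi>, Ay)"] \<xi>(1) by (simp add: dist_real_def)
      have U': "\<bar>(Phi y A0 - Phi r0 A0) / (y - r0) - D\<bar> < \<epsilon>" using elim(1) by (simp add: dist_real_def)
      have m1: "m y \<le> Phi y A0" unfolding m_def by (rule Phi_min[OF yI])
      have m2: "m r0 \<le> Phi r0 Ay" unfolding m_def A0_def by (rule Phi_min[OF r0])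
      have my: "m y = Phi y Ay" "m r0 = Phi r0 A0" by (simp_all add: m_def Ay_def A0_def)
      have low: "Phir \<xi> Ay * (y - r0) \<le> m y - m r0" using \<xi>(3) m2 my by (simp add: algebra_simps)
      have up: "m y - m r0 \<le> ((Phi y A0 - Phi r0 A0) / (y - r0)) * (y - r0)" using m1 my ne by simp
      have "(Phir \<xi> Ay \<le> (m y - m r0) / (y - r0) \<and> (m y - m r0) / (y - r0) \<le> (Phi y A0 - Phi r0 A0) / (y - r0))
          \<or> ((Phi y A0 - Phi r0 A0) / (y - r0) \<le> (m y - m r0) / (y - r0) \<and> (m y - m r0) / (y - r0) \<le> Phir \<xi> Ay)"
      proof (cases "y - r0 > 0")
        case True
        then show ?thesis using low up by (simp add: pos_le_divide_eq pos_divide_le_eq)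
      next
        case False
        then have "y - r0 < 0" using ne by simp
        then show ?thesis using low up by (simp add: neg_le_divide_eq neg_divide_le_eq)
      qed
      from between_close[OF this L U'] show ?case by (simp add: dist_real_def)
    qed
  qed
  then show ?thesis unfolding has_field_derivative_iff D_def A0_def .
qed

end

lemma ball_sub_preimage:
  fixes \<eta>0 :: "'a::euclidean_space"
  assumes \<eta>0: "norm \<eta>0 = 1" and \<epsilon>: "\<epsilon> > 0"
  defines "d \<equiv> min \<epsilon> 1 / 4"
  shows "ball ((1/2) *\<^sub>R \<eta>0) d \<subseteq> ball 0 1 \<inter> radproj -` (sphere 0 1 \<inter> ball \<eta>0 \<epsilon>)"
proof
  fix x assume "x \<in> ball ((1/2) *\<^sub>R \<eta>0) d"
  then have xc: "norm (x - (1/2) *\<^sub>R \<eta>0) < d" by (simp add: dist_norm norm_minus_commute)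
  have d: "d > 0" "d \<le> 1/4" "4 * d \<le> \<epsilon>" using \<epsilon> by (auto simp: d_def)
  have nc: "norm ((1/2) *\<^sub>R \<eta>0) = 1/2" using \<eta>0 by simp
  have "\<bar>norm x - 1/2\<bar> \<le> norm (x - (1/2) *\<^sub>R \<eta>0)"
    using norm_triangle_ineq3[of x "(1/2) *\<^sub>R \<eta>0"] nc by simp
  then have nx: "\<bar>norm x - 1/2\<bar> < d" using xc by simp
  then have x0: "norm x > 0" "norm x < 1" using d by (auto simp: abs_less_iff)
  then have xne: "x \<noteq> 0" by auto
  have "x /\<^sub>R norm x - \<eta>0 = (x /\<^sub>R norm x - 2 *\<^sub>R x) + (2 *\<^sub>R x - \<eta>0)" by simp
  then have "norm (x /\<^sub>R norm x - \<eta>0) \<le> norm (x /\<^sub>R norm x - 2 *\<^sub>R x) + norm (2 *\<^sub>R x - \<eta>0)"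
    by (metis norm_triangle_ineq)
  also have "norm (x /\<^sub>R norm x - 2 *\<^sub>R x) = \<bar>1 - 2 * norm x\<bar>"
  proof -
    have "x /\<^sub>R norm x - 2 *\<^sub>R x = (1 / norm x - 2) *\<^sub>R x" by (simp add: scaleR_diff_left inverse_eq_divide)
    then have "norm (x /\<^sub>R norm x - 2 *\<^sub>R x) = \<bar>1 / norm x - 2\<bar> * norm x" by simp
    also have "\<dots> = \<bar>(1 / norm x - 2) * norm x\<bar>" using x0 by (simp add: abs_mult)
    also have "(1 / norm x - 2) * norm x = 1 - 2 * norm x" using x0 by (simp add: algebra_simps)
    finally show ?thesis .
  qed
  also have "norm (2 *\<^sub>R x - \<eta>0) = 2 * norm (x - (1/2) *\<^sub>R \<eta>0)"
  proof -
    have "2 *\<^sub>R x - \<eta>0 = 2 *\<^sub>R (x - (1/2) *\<^sub>R \<eta>0)" by (simp add: algebra_simps)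
    then show ?thesis by simp
  qed
  finally have "norm (x /\<^sub>R norm x - \<eta>0) \<le> \<bar>1 - 2 * norm x\<bar> + 2 * norm (x - (1/2) *\<^sub>R \<eta>0)" .
  moreover have "\<bar>1 - 2 * norm x\<bar> < 2 * d" using nx by (auto simp: abs_less_iff)
  ultimately have "norm (x /\<^sub>R norm x - \<eta>0) < \<epsilon>" using xc d by linarith
  then have "radproj x \<in> ball \<eta>0 \<epsilon>" using xne by (simp add: radproj_def dist_norm norm_minus_commute)
  then show "x \<in> ball 0 1 \<inter> radproj -` (sphere 0 1 \<inter> ball \<eta>0 \<epsilon>)"
    using radproj_sphere[of x] x0 by simp
qed

lemma ss_pos_open:
  fixes \<eta>0 :: "'a::euclidean_space"
  assumes \<eta>0: "norm \<eta>0 = 1" and \<epsilon>: "\<epsilon> > 0"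
  shows "emeasure (sphere_sigma::'a measure) (sphere 0 1 \<inter> ball \<eta>0 \<epsilon>) \<noteq> 0"
proof -
  let ?A = "sphere (0::'a) 1 \<inter> ball \<eta>0 \<epsilon>"
  let ?d = "min \<epsilon> 1 / 4"
  have Ab: "?A \<in> sets borel" by auto
  have A: "?A \<in> sets (restrict_space borel (sphere (0::'a) 1))"
    using Ab by (auto simp: sets_restrict_space)
  have pre: "radproj -` ?A \<in> sets borel"
    using measurable_sets[OF radproj_meas Ab] by simp
  have "emeasure (sphere_sigma::'a measure) ?A = emeasure (uniform_measure lborel (ball 0 1)) (radproj -` ?A)"
    unfolding ss_def2 by (subst emeasure_distr[OF radproj_meas2 A]) simp
  also have "\<dots> = emeasure lborel (ball 0 1 \<inter> radproj -` ?A) / emeasure lborel (ball (0::'a) 1)"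
    using pre by (subst emeasure_uniform_measure) auto
  finally have eq: "emeasure (sphere_sigma::'a measure) ?A = emeasure lborel (ball 0 1 \<inter> radproj -` ?A) / emeasure lborel (ball (0::'a) 1)" .
  have "?d > 0" using \<epsilon> by simp
  have uv: "unit_ball_vol (real DIM('a)) > 0" by (rule unit_ball_vol_pos) simp
  have "unit_ball_vol (real DIM('a)) * ?d ^ DIM('a) > 0"
    using uv \<open>?d > 0\<close> by simp
  then have "emeasure lborel (ball ((1/2) *\<^sub>R \<eta>0) ?d) \<noteq> 0"
  proof -
    have "min \<epsilon> 1 \<noteq> 0" using \<epsilon> by simp
    moreover have "unit_ball_vol (real DIM('a)) \<noteq> 0" using uv by linarith
    ultimately show ?thesis
      using \<open>?d > 0\<close> emeasure_ball[of ?d "(1/2) *\<^sub>R \<eta>0"] by simp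
  qed
  moreover have "emeasure lborel (ball ((1/2) *\<^sub>R \<eta>0) ?d) \<le> emeasure lborel (ball 0 1 \<inter> radproj -` ?A)"
    by (rule emeasure_mono[OF ball_sub_preimage[OF \<eta>0 \<epsilon>]]) (use pre in auto)
  ultimately have "emeasure lborel (ball 0 1 \<inter> radproj -` ?A) \<noteq> 0" by (auto simp: zero_less_iff_neq_zero[symmetric])
  then show ?thesis unfolding eq using emeasure_lborel_ball_finite[of "0::'a" 1]
    by (simp add: ennreal_divide_eq_0_iff)
qed

context kset begin

lemma psi_pos: "s \<noteq> 0 \<Longrightarrow> psi q s > 0" by (simp add: psi_def)

lemma integral_pos_cont:
  fixes f :: "'a \<Rightarrow> real"
  assumes c: "continuous_on (sphere 0 1) f" and nn: "\<And>\<eta>. \<eta> \<in> sphere 0 1 \<Longrightarrow> f \<eta> \<ge> 0"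
    and \<eta>0: "\<eta>0 \<in> sphere 0 1" and p: "f \<eta>0 > 0"
  shows "(\<integral>\<eta>. f \<eta> \<partial>(sphere_sigma::'a measure)) > 0"
proof -
  have "f \<eta>0 / 2 > 0" using p by simp
  from c[unfolded continuous_on_iff, rule_format, OF \<eta>0 this]
  obtain \<epsilon> where \<epsilon>: "\<epsilon> > 0" "\<And>\<eta>. \<eta> \<in> sphere 0 1 \<Longrightarrow> dist \<eta> \<eta>0 < \<epsilon> \<Longrightarrow> dist (f \<eta>) (f \<eta>0) < f \<eta>0 / 2"
    by blast
  let ?A = "sphere (0::'a) 1 \<inter> ball \<eta>0 \<epsilon>"
  have "(\<integral>\<eta>. 0 \<partial>(sphere_sigma::'a measure)) < (\<integral>\<eta>. f \<eta> \<partial>(sphere_sigma::'a measure))"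
  proof (rule finite_measure.integral_less_AE[OF ss_finite, where A="?A"])
    show "integrable sphere_sigma f" by (rule ss_int_cont[OF c])
    show "emeasure sphere_sigma ?A \<noteq> 0" using ss_pos_open[of \<eta>0 \<epsilon>] \<eta>0 \<epsilon> by simp
    show "?A \<in> sets sphere_sigma" by (auto simp: ss_sets sets_restrict_space)
    show "AE \<eta> in sphere_sigma. \<eta> \<in> ?A \<longrightarrow> 0 \<noteq> f \<eta>"
    proof (rule AE_I2, rule impI)
      fix \<eta> :: 'a assume "\<eta> \<in> ?A"
      then have "dist (f \<eta>) (f \<eta>0) < f \<eta>0 / 2" using \<epsilon>(2)[of \<eta>] by (auto simp: dist_commute)
      then show "0 \<noteq> f \<eta>" by (auto simp: dist_real_def)
    qed
    show "AE \<eta> in sphere_sigma. 0 \<le> f \<eta>" by (rule AE_I2) (simp add: ss_space nn)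
  qed simp
  then show ?thesis by simp
qed

lemma m_pos: assumes r: "r \<in> I" "r \<noteq> 0" shows "m r > 0"
proof -
  define A where "A = Amin r"
  have "real n \<ge> 1" using n1 by simp
  then have gam: "real n + 2*\<alpha> > 0" using alpha by linarith
  have "Kf \<alpha> n r 1 \<noteq> Kf \<alpha> n r (-1)" by (rule Kf_ends[OF Cpos]) (use r gam in auto)
  then obtain \<eta>0 where \<eta>0: "\<eta>0 \<in> sphere (0::'a) 1" "Kf \<alpha> n r (\<eta>0 \<bullet> e) \<noteq> A"
  proof (cases "Kf \<alpha> n r 1 = A")
    case True
    then have "Kf \<alpha> n r ((-e) \<bullet> e) \<noteq> A" using \<open>Kf \<alpha> n r 1 \<noteq> Kf \<alpha> n r (-1)\<close> e1 by (simp add: norm_eq_1)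
    then show ?thesis using that[of "-e"] e1 by simp
  next
    case False
    then have "Kf \<alpha> n r (e \<bullet> e) \<noteq> A" using e1 by (simp add: norm_eq_1)
    then show ?thesis using that[of e] e1 by simp
  qed
  have "(\<integral>\<eta>. psi q (Kf \<alpha> n r (\<eta> \<bullet> e) - A) \<partial>(sphere_sigma::'a measure)) > 0"
    by (rule integral_pos_cont[OF psiK_cont1[OF r(1)] _ \<eta>0(1)]) (use \<eta>0(2) psi_pos in \<open>auto simp: psi_def\<close>)
  then show ?thesis by (simp add: m_def Phi_def A_def)
qed

lemma Amin_contI: "continuous_on I Amin"
  using Amin_cont continuous_at_imp_continuous_on by blast

lemma dm_cont: "continuous_on I (\<lambda>r. Phir r (Amin r))"
proof -
  have c: "continuous_on I (\<lambda>r. (r, Amin r))" by (intro continuous_intros Amin_contI)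
  have im: "(\<lambda>r. (r, Amin r)) ` I \<subseteq> I \<times> UNIV" by auto
  from continuous_on_compose2[OF Phir_cont c im] show ?thesis by simp
qed

end

lemma ss_emeasure:
  assumes X: "X \<in> sets (restrict_space borel (sphere (0::'a::euclidean_space) 1))"
  shows "emeasure (sphere_sigma::'a measure) X = emeasure lborel (ball 0 1 \<inter> radproj -` X) / emeasure lborel (ball (0::'a) 1)"
proof -
  have Xb: "X \<in> sets borel" using X by (auto simp: sets_restrict_space)
  have pre: "radproj -` X \<in> sets borel"
    using measurable_sets[OF radproj_meas Xb] by simp
  have "emeasure (sphere_sigma::'a measure) X = emeasure (uniform_measure lborel (ball 0 1)) (radproj -` X)"
    unfolding ss_def2 by (subst emeasure_distr[OF radproj_meas2 X]) simp
  also have "\<dots> = emeasure lborel (ball 0 1 \<inter> radproj -` X) / emeasure lborel (ball (0::'a) 1)"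
    using pre by (subst emeasure_uniform_measure) auto
  finally show ?thesis .
qed

lemma lborel_bounded_eq:
  assumes "E \<in> sets borel" "bounded E"
  shows "emeasure lborel E = ennreal (measure lebesgue (E::'a::euclidean_space set))"
proof -
  have "E \<in> sets lebesgue" using assms by (simp add: sets_completionI_sets)
  then have "E \<in> lmeasurable" using assms by (intro bounded_set_imp_lmeasurable) auto
  then have "emeasure lebesgue E = measure lebesgue E" by (rule emeasure_eq_measure2)
  then show ?thesis using assms by simp
qed

lemma orth_meas: "orthogonal_transformation (T::'a::euclidean_space \<Rightarrow> 'a) \<Longrightarrow> T \<in> borel_measurable borel"
  by (intro borel_measurable_continuous_onI linear_continuous_on)
     (simp add: linear_conv_bounded_linear[symmetric] orthogonal_transformation_linear)

lemma orth_preimage_lborel: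
  fixes T :: "(real,'n::{finite,wellorder}) vec \<Rightarrow> (real,'n) vec"
  assumes T: "orthogonal_transformation T" and E: "E \<in> sets borel" "E \<subseteq> ball 0 1"
  shows "emeasure lborel (T -` E) = emeasure lborel E"
proof -
  have TE: "T -` E \<in> sets borel" using measurable_sets[OF orth_meas[OF T] E(1)] by simp
  have bE: "bounded E" using E(2) bounded_subset[OF bounded_ball] by blast
  have "T -` E \<subseteq> ball 0 1" using E(2) orthogonal_transformation_norm[OF T] by auto
  then have bTE: "bounded (T -` E)" using bounded_subset[OF bounded_ball] by blast
  have eq: "T -` E = inv T ` E" using bij_vimage_eq_inv_image[OF orthogonal_transformation_bij[OF T]] .
  have Elm: "E \<in> lmeasurable" using E bE by (intro bounded_set_imp_lmeasurable) (auto simp: sets_completionI_sets)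
  have "measure lebesgue (T -` E) = measure lebesgue E"
    unfolding eq by (rule measure_orthogonal_image[OF orthogonal_transformation_inv[OF T] Elm])
  then show ?thesis using lborel_bounded_eq[OF TE bTE] lborel_bounded_eq[OF E(1) bE] by simp
qed

lemma orth_sphere_meas:
  fixes T :: "'a::euclidean_space \<Rightarrow> 'a"
  assumes T: "orthogonal_transformation T"
  shows "T \<in> measurable (sphere_sigma::'a::euclidean_space measure) sphere_sigma"
proof -
  have "T \<in> measurable (restrict_space borel (sphere (0::'a) 1)) (restrict_space borel (sphere 0 1))"
    by (rule measurable_restrict_space2)
       (auto intro!: measurable_restrict_space1 orth_meas[OF T] simp: orthogonal_transformation_norm[OF T])
  then show ?thesis using measurable_cong_sets[OF ss_sets ss_sets] by blast
qed

lemma radproj_orth: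
  assumes T: "orthogonal_transformation T" and x: "x \<noteq> 0"
  shows "radproj (T x) = T (radproj x)"
proof -
  have "T x \<noteq> 0" using x orthogonal_transformation_norm[OF T, of x] by auto
  then show ?thesis using x
    by (simp add: radproj_def orthogonal_transformation_norm[OF T] orthogonal_transformation_scaleR[OF T])
qed

lemma ss_orth_distr:
  fixes T :: "(real,'n::{finite,wellorder}) vec \<Rightarrow> (real,'n) vec"
  assumes T: "orthogonal_transformation T"
  shows "distr sphere_sigma sphere_sigma T = sphere_sigma"
proof (rule measure_eqI)
  show "sets (distr sphere_sigma sphere_sigma T) = sets sphere_sigma" by simp
  fix A assume "A \<in> sets (distr sphere_sigma sphere_sigma T)"
  then have A: "A \<in> sets (restrict_space borel (sphere (0::(real,'n) vec) 1))" by (simp add: ss_sets)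
  then have Ab: "A \<in> sets borel" by (auto simp: sets_restrict_space)
  have A': "T -` A \<inter> sphere 0 1 \<in> sets (restrict_space borel (sphere (0::(real,'n) vec) 1))"
    using measurable_sets[OF orth_sphere_meas[OF T], of A] A by (simp add: ss_sets ss_space)
  then have A'b: "T -` A \<inter> sphere 0 1 \<in> sets borel" by (auto simp: sets_restrict_space)
  define E where "E = ball 0 1 \<inter> radproj -` A"
  define E' where "E' = ball 0 1 \<inter> radproj -` (T -` A \<inter> sphere 0 1)"
  have Eb: "E \<in> sets borel" unfolding E_def using measurable_sets[OF radproj_meas Ab] by auto
  have E'b: "E' \<in> sets borel" unfolding E'_def using measurable_sets[OF radproj_meas A'b] by auto
  have null: "{0} \<in> null_sets (lborel::((real,'n) vec) measure)" by (simp add: null_sets_def)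
  have "E' - {0} = T -` E - {0}"
  proof (intro set_eqI iffI)
    fix x assume "x \<in> E' - {0}"
    then show "x \<in> T -` E - {0}"
      using radproj_orth[OF T, of x] orthogonal_transformation_norm[OF T, of x]
      by (auto simp: E_def E'_def)
  next
    fix x assume "x \<in> T -` E - {0}"
    then show "x \<in> E' - {0}"
      using radproj_orth[OF T, of x] orthogonal_transformation_norm[OF T, of x] radproj_sphere[of x]
      by (auto simp: E_def E'_def)
  qed
  moreover have E'l: "E' \<in> sets lborel" using E'b by simp
  moreover have TEl: "T -` E \<in> sets lborel" using measurable_sets[OF orth_meas[OF T] Eb] by simp
  ultimately have "emeasure lborel E' = emeasure lborel (T -` E)"
    using emeasure_Diff_null_set[OF null E'l] emeasure_Diff_null_set[OF null TEl]
    by metis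
  also have "\<dots> = emeasure lborel E" by (rule orth_preimage_lborel[OF T Eb]) (auto simp: E_def)
  finally have "emeasure lborel E' = emeasure lborel E" .
  have "emeasure (distr sphere_sigma sphere_sigma T) A = emeasure sphere_sigma (T -` A \<inter> space sphere_sigma)"
    by (rule emeasure_distr[OF orth_sphere_meas[OF T]]) (simp add: ss_sets A)
  also have "\<dots> = emeasure lborel E' / emeasure lborel (ball (0::(real,'n) vec) 1)"
    unfolding ss_space E'_def by (rule ss_emeasure[OF A'])
  also have "\<dots> = emeasure lborel E / emeasure lborel (ball (0::(real,'n) vec) 1)"
    using \<open>emeasure lborel E' = emeasure lborel E\<close> by simp
  also have "\<dots> = emeasure sphere_sigma A"
    unfolding E_def by (rule ss_emeasure[OF A, symmetric])
  finally show "emeasure (distr sphere_sigma sphere_sigma T) A = emeasure sphere_sigma A" .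
qed

lemma ss_orth_integral:
  fixes T :: "(real,'n::{finite,wellorder}) vec \<Rightarrow> (real,'n) vec" and h :: "(real,'n) vec \<Rightarrow> real"
  assumes T: "orthogonal_transformation T" and h: "h \<in> borel_measurable sphere_sigma"
  shows "(\<integral>\<eta>. h (T \<eta>) \<partial>sphere_sigma) = (\<integral>\<eta>. h \<eta> \<partial>sphere_sigma)"
proof -
  have "(\<integral>\<eta>. h \<eta> \<partial>distr sphere_sigma sphere_sigma T) = (\<integral>\<eta>. h (T \<eta>) \<partial>sphere_sigma)"
    by (rule integral_distr[OF orth_sphere_meas[OF T]]) (use h in simp)
  then show ?thesis using ss_orth_distr[OF T] by simp
qed

lemma holder_zero:
  fixes g h :: "'x \<Rightarrow> real"
  assumes nn: "\<And>x. x \<in> space M \<Longrightarrow> g x \<ge> 0" and q: "q > 0"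
    and ig: "integrable M (\<lambda>x. g x powr q)" and A0: "(\<integral>x. g x powr q \<partial>M) = 0"
  shows "(\<integral>x. g x * h x \<partial>M) = 0"
proof -
  have "AE x in M. g x powr q = 0"
    using integral_nonneg_eq_0_iff_AE[OF ig] A0 by auto
  then have "AE x in M. g x * h x = 0" by eventually_elim simp
  then show ?thesis by (rule integral_eq_zero_AE)
qed

lemma holder:
  fixes g h :: "'x \<Rightarrow> real"
  assumes p: "p > 1" and q: "q = p/(p-1)"
    and nng: "\<And>x. x \<in> space M \<Longrightarrow> g x \<ge> 0" and nnh: "\<And>x. x \<in> space M \<Longrightarrow> h x \<ge> 0"
    and ig: "integrable M (\<lambda>x. g x powr q)" and ih: "integrable M (\<lambda>x. h x powr p)"
    and igh: "integrable M (\<lambda>x. g x * h x)"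
  shows "(\<integral>x. g x * h x \<partial>M) \<le> (\<integral>x. g x powr q \<partial>M) powr (1/q) * (\<integral>x. h x powr p \<partial>M) powr (1/p)"
proof -
  have "p - 1 > 0" using p by simp
  then have q1: "q > 1" unfolding q by (simp add: less_divide_eq)
  have pq: "1/q + 1/p = 1"
  proof -
    have "1/q = (p-1)/p" unfolding q by simp
    moreover have "(p-1)/p + 1/p = 1" using p by (simp add: add_divide_distrib[symmetric])
    ultimately show ?thesis by simp
  qed
  define A where "A = (\<integral>x. g x powr q \<partial>M)"
  define B where "B = (\<integral>x. h x powr p \<partial>M)"
  have A0: "A \<ge> 0" unfolding A_def by (rule integral_nonneg_AE) simp
  have B0: "B \<ge> 0" unfolding B_def by (rule integral_nonneg_AE) simp
  show ?thesis
  proof (cases "A = 0 \<or> B = 0")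
    case True
    then have "(\<integral>x. g x * h x \<partial>M) = 0"
    proof
      assume "A = 0" then show ?thesis using holder_zero[OF nng _ ig] q1 by (simp add: A_def)
    next
      assume "B = 0" then have "(\<integral>x. h x * g x \<partial>M) = 0" using holder_zero[OF nnh _ ih] p by (simp add: B_def)
      then show ?thesis by (simp add: mult.commute)
    qed
    then show ?thesis by simp
  next
    case False
    then have Ap: "A > 0" and Bp: "B > 0" using A0 B0 by auto
    define a where "a = A powr (1/q)"
    define b where "b = B powr (1/p)"
    have ap: "a > 0" and bp: "b > 0" using Ap Bp by (simp_all add: a_def b_def)
    have aq: "a powr q = A" using Ap q1 by (simp add: a_def powr_powr)
    have bq: "b powr p = B" using Bp p by (simp add: b_def powr_powr)
    have pt: "g x * h x / (a * b) \<le> g x powr q / (q * A) + h x powr p / (p * B)" if x: "x \<in> space M" for x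
    proof -
      have "(g x / a) * (h x / b) \<le> (g x / a) powr q / q + (h x / b) powr p / p"
        by (rule Youngs_inequality[OF q1 p pq]) (use nng[OF x] nnh[OF x] ap bp in auto)
      also have "(g x / a) powr q = g x powr q / A" using nng[OF x] ap by (simp add: powr_divide aq)
      also have "(h x / b) powr p = h x powr p / B" using nnh[OF x] bp by (simp add: powr_divide bq)
      finally show ?thesis by (simp add: field_simps)
    qed
    have "(\<integral>x. g x * h x / (a * b) \<partial>M) \<le> (\<integral>x. g x powr q / (q * A) + h x powr p / (p * B) \<partial>M)"
      by (rule integral_mono) (use pt ig ih igh in auto)
    also have "\<dots> = A / (q * A) + B / (p * B)"
      using ig ih by (simp add: A_def B_def)
    also have "\<dots> = 1" using Ap Bp pq by (simp add: field_simps)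
    finally have "(\<integral>x. g x * h x \<partial>M) / (a * b) \<le> 1" by simp
    then have "(\<integral>x. g x * h x \<partial>M) \<le> a * b" using ap bp by (simp add: divide_le_eq)
    then show ?thesis by (simp add: a_def b_def A_def B_def)
  qed
qed

lemma norm_le_powr: "p \<ge> 1 \<Longrightarrow> (x::real) \<ge> 0 \<Longrightarrow> x \<le> 1 + x powr p"
proof (cases "x \<le> 1")
  case False
  assume "p \<ge> 1"
  then have "x powr 1 \<le> x powr p" using False by (intro powr_mono) auto
  then show ?thesis using False by simp
qed (smt (verit) powr_ge_zero)

lemma Lp_integrable:
  fixes f :: "'x \<Rightarrow> 'b::{banach,second_countable_topology}"
  assumes fin: "finite_measure M" and p: "p \<ge> 1" and fm: "f \<in> borel_measurable M"
    and ip: "integrable M (\<lambda>x. norm (f x) powr p)"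
  shows "integrable M f"
proof (rule Bochner_Integration.integrable_bound[where f="\<lambda>x. 1 + norm (f x) powr p"])
  show "integrable M (\<lambda>x. 1 + norm (f x) powr p)"
    by (intro Bochner_Integration.integrable_add finite_measure.integrable_const[OF fin] ip)
  show "AE x in M. norm (f x) \<le> norm (1 + norm (f x) powr p)"
    by (rule AE_I2) (use norm_le_powr[OF p] in \<open>auto simp: abs_of_nonneg add_nonneg_nonneg\<close>)
qed (rule fm)

lemma integrable_bdd_scaleR:
  fixes f :: "'x \<Rightarrow> 'b::{banach,second_countable_topology}" and k :: "'x \<Rightarrow> real"
  assumes f: "integrable M f" and k: "k \<in> borel_measurable M" and B: "\<And>x. x \<in> space M \<Longrightarrow> \<bar>k x\<bar> \<le> B"
  shows "integrable M (\<lambda>x. k x *\<^sub>R f x)"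
proof (rule Bochner_Integration.integrable_bound[where f="\<lambda>x. B *\<^sub>R norm (f x)"])
  show "integrable M (\<lambda>x. B *\<^sub>R norm (f x))" using f by simp
  show "(\<lambda>x. k x *\<^sub>R f x) \<in> borel_measurable M" using f k by measurable
  show "AE x in M. norm (k x *\<^sub>R f x) \<le> norm (B *\<^sub>R norm (f x))"
  proof (rule AE_I2)
    fix x assume x: "x \<in> space M"
    have "\<bar>k x\<bar> * norm (f x) \<le> B * norm (f x)" using B[OF x] by (intro mult_right_mono) auto
    also have "\<dots> \<le> \<bar>B\<bar> * norm (f x)" by (intro mult_right_mono) auto
    finally show "norm (k x *\<^sub>R f x) \<le> norm (B *\<^sub>R norm (f x))" by simp
  qed
qed

lemma e_last_norm: "norm (e_last :: (real,'n::{finite,wellorder}) vec) = 1"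
  by (simp add: e_last_def)

lemma P_zero: "norm \<zeta> = 1 \<Longrightarrow> P_kernel \<alpha> 0 \<zeta> = C_const CARD('n) \<alpha>" for \<zeta> :: "(real,'n::{finite,wellorder}) vec"
  by (simp add: P_kernel_def)

lemma P_cont:
  fixes x :: "(real,'n::{finite,wellorder}) vec"
  assumes x: "norm x < 1"
  shows "continuous_on (sphere 0 1) (P_kernel \<alpha> x)"
proof -
  have "\<forall>\<zeta>\<in>sphere 0 1. norm (x - \<zeta>) \<noteq> 0" using x by auto
  then have "continuous_on (sphere 0 1) (\<lambda>\<zeta>. C_const CARD('n) \<alpha> * (1 - norm x ^ 2) powr (1 + 2 * \<alpha>)
      / norm (x - \<zeta>) powr (real CARD('n) + 2 * \<alpha>))"
    by (intro continuous_on_divide continuous_on_const continuous_on_powr continuous_on_norm continuous_on_diff continuous_on_id) auto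
  then show ?thesis unfolding P_kernel_def[abs_def] .
qed

lemma P_orth:
  fixes T :: "(real,'n::{finite,wellorder}) vec \<Rightarrow> (real,'n) vec"
  assumes T: "orthogonal_transformation T"
  shows "P_kernel \<alpha> (T x) (T \<zeta>) = P_kernel \<alpha> x \<zeta>"
proof -
  have "T x - T \<zeta> = T (x - \<zeta>)" using orthogonal_transformation_linear[OF T] by (simp add: linear_diff)
  then show ?thesis unfolding P_kernel_def by (simp add: orthogonal_transformation_norm[OF T])
qed

lemma rot_int:
  fixes x e :: "(real,'n::{finite,wellorder}) vec" and h :: "real \<Rightarrow> real"
  assumes ks: "kset \<alpha> q CARD('n) e" and x: "norm x < 1" and hc: "continuous_on UNIV h"
  shows "(\<integral>\<zeta>. h (P_kernel \<alpha> x \<zeta>) \<partial>sphere_sigma) = (\<integral>\<eta>. h (Kf \<alpha> CARD('n) (norm x) (\<eta> \<bullet> e)) \<partial>sphere_sigma)"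
proof -
  interpret kset \<alpha> q "CARD('n)" e by (rule ks)
  have "norm x = norm (norm x *\<^sub>R e)" using e1 by simp
  then obtain T where T: "orthogonal_transformation T" "T x = norm x *\<^sub>R e"
    using orthogonal_transformation_exists by metis
  define k where "k = (\<lambda>\<eta>::(real,'n) vec. h (Kf \<alpha> CARD('n) (norm x) (\<eta> \<bullet> e)))"
  have "-1 < norm x" using norm_ge_zero[of x] by linarith
  then have "norm x \<in> I" using x by simp
  then have kc: "continuous_on (sphere 0 1) k"
    unfolding k_def using continuous_on_compose2[OF hc K_cont1] by auto
  have "(\<integral>\<zeta>. h (P_kernel \<alpha> x \<zeta>) \<partial>sphere_sigma) = (\<integral>\<zeta>. k (T \<zeta>) \<partial>sphere_sigma)"
  proof (rule Bochner_Integration.integral_cong[OF refl])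
    fix \<zeta> :: "(real,'n) vec" assume "\<zeta> \<in> space sphere_sigma"
    then have "norm (T \<zeta>) = 1" by (simp add: ss_space orthogonal_transformation_norm[OF T(1)])
    then show "h (P_kernel \<alpha> x \<zeta>) = k (T \<zeta>)"
      unfolding k_def using P_orth[OF T(1), of \<alpha> x \<zeta>] P_Kf[OF e1, of "T \<zeta>" \<alpha> "norm x"] T(2) by simp
  qed
  also have "\<dots> = (\<integral>\<zeta>. k \<zeta> \<partial>sphere_sigma)"
    by (rule ss_orth_integral[OF T(1) ss_meas_cont[OF kc]])
  finally show ?thesis unfolding k_def .
qed

lemma G_eq:
  fixes p :: real
  assumes ks: "kset \<alpha> (p/(p-1)) CARD('n) (e_last::(real,'n::{finite,wellorder}) vec)" and r: "0 \<le> r" "r < 1"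
    and p: "p > 1"
  shows "G_fun \<alpha> p r TYPE('n) = (kset.m \<alpha> (p/(p-1)) CARD('n) (e_last::(real,'n) vec) r) powr (1/(p/(p-1)))"
proof -
  interpret kset \<alpha> "p/(p-1)" "CARD('n)" "e_last::(real,'n) vec" by (rule ks)
  have rI: "r \<in> I" using r by simp
  have inner: "(\<integral>\<eta>. \<bar>P_kernel \<alpha> (r *\<^sub>R e_last) \<eta> - a\<bar> powr (p/(p-1)) \<partial>(sphere_sigma::(real,'n) vec measure)) = Phi r a" for a
    unfolding Phi_def
  proof (rule Bochner_Integration.integral_cong[OF refl])
    fix \<eta> :: "(real,'n) vec" assume "\<eta> \<in> space sphere_sigma"
    then have "norm \<eta> = 1" by (simp add: ss_space)
    then show "\<bar>P_kernel \<alpha> (r *\<^sub>R e_last) \<eta> - a\<bar> powr (p/(p-1)) = psi (p/(p-1)) (Kf \<alpha> CARD('n) r (\<eta> \<bullet> e_last) - a)"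
      using P_Kf[OF e_last_norm, of \<eta> \<alpha> r] by (simp add: psi_def)
  qed
  have "G_fun \<alpha> p r TYPE('n) = (INF a\<in>{0..}. (Phi r a) powr (1/(p/(p-1))))"
    by (simp add: G_fun_def Let_def inner)
  also have "\<dots> = (Phi r (Amin r)) powr (1/(p/(p-1)))"
  proof (rule cInf_eq_minimum)
    show "Phi r (Amin r) powr (1 / (p / (p - 1))) \<in> (\<lambda>a. Phi r a powr (1 / (p / (p - 1)))) ` {0..}"
      using Amin(2)[OF rI] by (intro imageI) simp
    fix x assume "x \<in> (\<lambda>a. Phi r a powr (1 / (p / (p - 1)))) ` {0..}"
    then obtain a where "x = Phi r a powr (1 / (p / (p - 1)))" by blast
    moreover have "Phi r (Amin r) powr (1 / (p / (p - 1))) \<le> Phi r a powr (1 / (p / (p - 1)))"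
      using Phi_min[OF rI, of a] Phi_nonneg[of r "Amin r"] p by (intro powr_mono2) auto
    ultimately show "Phi r (Amin r) powr (1 / (p / (p - 1))) \<le> x" by simp
  qed
  finally show ?thesis by (simp add: m_def)
qed

lemma extremal:
  fixes p :: real and y :: "(real,'n::{finite,wellorder}) vec"
  assumes ks: "kset \<alpha> (p/(p-1)) CARD('n) (e_last::(real,'n) vec)" and p: "p > 1" and y: "norm y < 1"
  shows "\<exists>g. in_Lp p g \<and> P_transform \<alpha> g 0 = 0
     \<and> norm (P_transform \<alpha> g y) = kset.m \<alpha> (p/(p-1)) CARD('n) (e_last::(real,'n) vec) (norm y)
     \<and> Lp_norm p g = (kset.m \<alpha> (p/(p-1)) CARD('n) (e_last::(real,'n) vec) (norm y)) powr (1/p)"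
proof -
  interpret kset \<alpha> "p/(p-1)" "CARD('n)" "e_last::(real,'n) vec" by (rule ks)
  define q where "q = p/(p-1)"
  define r where "r = norm y"
  have "-1 < norm y" using norm_ge_zero[of y] by linarith
  then have "-1 < r" by (simp add: r_def)
  then have rI: "r \<in> I" using y by (simp add: r_def)
  define A where "A = Amin r"
  define g where "g = (\<lambda>\<zeta>. phi q (P_kernel \<alpha> y \<zeta> - A) *\<^sub>R (e_last::(real,'n) vec))"
  have qp: "(q - 1) * p = q"
  proof -
    have "p - 1 \<noteq> 0" using p by simp
    then show ?thesis unfolding q_def by (simp add: field_simps)
  qed
  have cA: "continuous_on UNIV (\<lambda>s::real. s - A)" by (intro continuous_intros)
  have q0: "q > 0" using q1 by (simp add: q_def)
  have hphi: "continuous_on UNIV (\<lambda>s. phi q (s - A))"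
    using continuous_on_compose2[OF phi_cont[OF q1[folded q_def]] cA] by simp
  have hpsi: "continuous_on UNIV (\<lambda>s. psi q (s - A))"
    using continuous_on_compose2[OF psi_cont[OF q0] cA] by simp
  have Pc: "continuous_on (sphere 0 1) (P_kernel \<alpha> y)" by (rule P_cont[OF y])
  have phic: "continuous_on (sphere 0 1) (\<lambda>\<zeta>. phi q (P_kernel \<alpha> y \<zeta> - A))"
    using continuous_on_compose2[OF hphi Pc] by simp
  have psic: "continuous_on (sphere 0 1) (\<lambda>\<zeta>. psi q (P_kernel \<alpha> y \<zeta> - A))"
    using continuous_on_compose2[OF hpsi Pc] by simp
  have gc: "continuous_on (sphere 0 1) g" unfolding g_def by (intro continuous_intros phic)
  have ng: "norm (g \<zeta>) powr p = psi q (P_kernel \<alpha> y \<zeta> - A)" for \<zeta>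
  proof -
    have "norm (g \<zeta>) = \<bar>P_kernel \<alpha> y \<zeta> - A\<bar> powr (q - 1)"
      by (simp add: g_def e_last_norm phi_abs)
    then show ?thesis by (simp add: powr_powr qp psi_def)
  qed
  have int_phi_y: "(\<integral>\<zeta>. phi q (P_kernel \<alpha> y \<zeta> - A) \<partial>sphere_sigma) = 0"
  proof -
    have "(\<integral>\<zeta>. phi q (P_kernel \<alpha> y \<zeta> - A) \<partial>sphere_sigma) = Psi r A"
      using rot_int[OF ks y hphi] by (simp add: Psi_def r_def q_def)
    then show ?thesis using Amin(1)[OF rI] by (simp add: A_def)
  qed
  have int_psi_y: "(\<integral>\<zeta>. psi q (P_kernel \<alpha> y \<zeta> - A) \<partial>sphere_sigma) = m r"
    using rot_int[OF ks y hpsi] by (simp add: Phi_def r_def q_def m_def A_def)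
  have iphi: "integrable sphere_sigma (\<lambda>\<zeta>. phi q (P_kernel \<alpha> y \<zeta> - A))" by (rule ss_int_cont[OF phic])
  have ipsi: "integrable sphere_sigma (\<lambda>\<zeta>. psi q (P_kernel \<alpha> y \<zeta> - A))" by (rule ss_int_cont[OF psic])
  show ?thesis
  proof (intro exI conjI)
    show "in_Lp p g" unfolding in_Lp_def
    proof
      show "g \<in> borel_measurable sphere_sigma" by (rule ss_meas_cont[OF gc])
      show "integrable sphere_sigma (\<lambda>\<zeta>. norm (g \<zeta>) powr p)" using ipsi by (simp add: ng)
    qed
    have "P_transform \<alpha> g 0 = (\<integral>\<zeta>. (C_const CARD('n) \<alpha> * phi q (P_kernel \<alpha> y \<zeta> - A)) *\<^sub>R e_last \<partial>sphere_sigma)"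
      unfolding P_transform_def
      by (rule Bochner_Integration.integral_cong[OF refl]) (simp add: ss_space P_zero g_def)
    also have "\<dots> = (\<integral>\<zeta>. C_const CARD('n) \<alpha> * phi q (P_kernel \<alpha> y \<zeta> - A) \<partial>sphere_sigma) *\<^sub>R e_last"
      using iphi by simp
    also have "\<dots> = 0" using int_phi_y by simp
    finally show "P_transform \<alpha> g 0 = 0" .
    have pt: "P_kernel \<alpha> y \<zeta> * phi q (P_kernel \<alpha> y \<zeta> - A) = psi q (P_kernel \<alpha> y \<zeta> - A) + A * phi q (P_kernel \<alpha> y \<zeta> - A)" for \<zeta>
      using mult_phi[OF q1[folded q_def], of "P_kernel \<alpha> y \<zeta> - A"] by (simp add: algebra_simps)
    have "P_transform \<alpha> g y = (\<integral>\<zeta>. (psi q (P_kernel \<alpha> y \<zeta> - A) + A * phi q (P_kernel \<alpha> y \<zeta> - A)) *\<^sub>R e_last \<partial>sphere_sigma)"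
      unfolding P_transform_def g_def by (simp add: pt[symmetric])
    also have "\<dots> = (\<integral>\<zeta>. psi q (P_kernel \<alpha> y \<zeta> - A) + A * phi q (P_kernel \<alpha> y \<zeta> - A) \<partial>sphere_sigma) *\<^sub>R e_last"
      using ipsi iphi by simp
    also have "(\<integral>\<zeta>. psi q (P_kernel \<alpha> y \<zeta> - A) + A * phi q (P_kernel \<alpha> y \<zeta> - A) \<partial>sphere_sigma) = m r"
      using ipsi iphi int_psi_y int_phi_y by simp
    finally have "P_transform \<alpha> g y = m r *\<^sub>R e_last" .
    then show "norm (P_transform \<alpha> g y) = m (norm y)"
      using Phi_nonneg[of r "Amin r"] by (simp add: e_last_norm m_def r_def)
    show "Lp_norm p g = m (norm y) powr (1/p)"
      unfolding Lp_norm_def ng int_psi_y r_def ..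
  qed
qed

theorem lemma3p1:
  fixes \<alpha> p :: real and f :: "real^('n::{finite,wellorder}) \<Rightarrow> real^('n::{finite,wellorder})"
  defines "G \<equiv> (\<lambda>r. G_fun \<alpha> p r TYPE('n::{finite,wellorder}))"
  assumes n3: "CARD('n::{finite,wellorder}) \<ge> 3"
    and alpha: "\<alpha> > -1/2"
    and p: "p > 1"
    and f: "in_Lp p f"
    and u0: "P_transform \<alpha> f 0 = 0"
  shows "(\<forall>x\<in>ball (0::real^('n::{finite,wellorder})) 1. norm (P_transform \<alpha> f x) \<le> G (norm x) * Lp_norm p f)
    \<and> G 0 = 0
    \<and> (\<forall>r\<in>{0<..<1}. G differentiable (at r))
    \<and> continuous_on {0<..<1} (deriv G)
    \<and> (\<forall>x\<in>ball (0::real^('n::{finite,wellorder})) 1. \<forall>c::real.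
         (\<forall>g. in_Lp p g \<and> P_transform \<alpha> g 0 = 0
              \<longrightarrow> norm (P_transform \<alpha> g x) \<le> c * Lp_norm p g)
         \<longrightarrow> G (norm x) \<le> c)"
proof -
  define q where "q = p/(p-1)"
  have pm1: "p - 1 > 0" using p by simp
  have q1: "q > 1" unfolding q_def using pm1 by (simp add: less_divide_eq)
  have q0: "q > 0" using q1 by simp
  have iq: "1/q = 1 - 1/p" unfolding q_def using pm1 by (simp add: field_simps)
  have ks: "kset \<alpha> (p/(p-1)) CARD('n) (e_last::(real,'n) vec)"
    by unfold_locales (use q1 alpha n3 e_last_norm in \<open>auto simp: q_def\<close>)
  interpret K: kset \<alpha> "p/(p-1)" "CARD('n)" "e_last::(real,'n) vec" by (rule ks)
  have Geq: "G r = K.m r powr (1/q)" if "0 \<le> r" "r < 1" for r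
    using G_eq[OF ks that p] by (simp add: G_def q_def)
  have rI: "r \<in> K.I" if "0 \<le> r" "r < 1" for r using that by simp
  have fm: "f \<in> borel_measurable sphere_sigma" and fp: "integrable sphere_sigma (\<lambda>\<zeta>. norm (f \<zeta>) powr p)"
    using f by (auto simp: in_Lp_def)
  have fi: "integrable sphere_sigma f" by (rule Lp_integrable[OF ss_finite _ fm fp]) (use p in simp)
  have int0: "integral\<^sup>L sphere_sigma f = 0"
  proof -
    have "P_transform \<alpha> f 0 = (\<integral>\<zeta>. C_const CARD('n) \<alpha> *\<^sub>R f \<zeta> \<partial>sphere_sigma)"
      unfolding P_transform_def
      by (rule Bochner_Integration.integral_cong[OF refl]) (simp add: ss_space P_zero)
    also have "\<dots> = C_const CARD('n) \<alpha> *\<^sub>R integral\<^sup>L sphere_sigma f" by simp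
    finally show ?thesis using u0 K.Cpos by simp
  qed
  have partA: "\<forall>x\<in>ball (0::(real,'n) vec) 1. norm (P_transform \<alpha> f x) \<le> G (norm x) * Lp_norm p f"
  proof
    fix x :: "(real,'n) vec" assume "x \<in> ball 0 1"
    then have x: "norm x < 1" by simp
    define A where "A = K.Amin (norm x)"
    have Pc: "continuous_on (sphere 0 1) (P_kernel \<alpha> x)" by (rule P_cont[OF x])
    have kc: "continuous_on (sphere 0 1) (\<lambda>\<zeta>. P_kernel \<alpha> x \<zeta> - A)" by (intro continuous_intros Pc)
    obtain B where B: "\<And>\<zeta>. \<zeta> \<in> sphere 0 1 \<Longrightarrow> norm (P_kernel \<alpha> x \<zeta> - A) \<le> B"
      using cont_bound[OF compact_sphere kc] by blast
    have i1: "integrable sphere_sigma (\<lambda>\<zeta>. (P_kernel \<alpha> x \<zeta> - A) *\<^sub>R f \<zeta>)"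
      by (rule integrable_bdd_scaleR[OF fi ss_meas_cont[OF kc]]) (use B in \<open>auto simp: ss_space\<close>)
    have "P_transform \<alpha> f x = (\<integral>\<zeta>. (P_kernel \<alpha> x \<zeta> - A) *\<^sub>R f \<zeta> + A *\<^sub>R f \<zeta> \<partial>sphere_sigma)"
      unfolding P_transform_def by (simp add: scaleR_left_diff_distrib)
    also have "\<dots> = (\<integral>\<zeta>. (P_kernel \<alpha> x \<zeta> - A) *\<^sub>R f \<zeta> \<partial>sphere_sigma) + A *\<^sub>R integral\<^sup>L sphere_sigma f"
      by (subst Bochner_Integration.integral_add[OF i1]) (use fi in simp_all)
    finally have eqP: "P_transform \<alpha> f x = (\<integral>\<zeta>. (P_kernel \<alpha> x \<zeta> - A) *\<^sub>R f \<zeta> \<partial>sphere_sigma)"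
      using int0 by simp
    have "norm (P_transform \<alpha> f x) \<le> (\<integral>\<zeta>. norm ((P_kernel \<alpha> x \<zeta> - A) *\<^sub>R f \<zeta>) \<partial>sphere_sigma)"
      unfolding eqP by (rule integral_norm_bound)
    also have "\<dots> = (\<integral>\<zeta>. \<bar>P_kernel \<alpha> x \<zeta> - A\<bar> * norm (f \<zeta>) \<partial>sphere_sigma)" by simp
    also have "\<dots> \<le> (\<integral>\<zeta>. \<bar>P_kernel \<alpha> x \<zeta> - A\<bar> powr q \<partial>sphere_sigma) powr (1/q) * (\<integral>\<zeta>. norm (f \<zeta>) powr p \<partial>sphere_sigma) powr (1/p)"
    proof (rule holder[OF p q_def])
      show "integrable sphere_sigma (\<lambda>\<zeta>. \<bar>P_kernel \<alpha> x \<zeta> - A\<bar> powr q)"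
        by (rule ss_int_cont) (intro continuous_on_powr' continuous_intros Pc, use q0 in auto)
      show "integrable sphere_sigma (\<lambda>\<zeta>. \<bar>P_kernel \<alpha> x \<zeta> - A\<bar> * norm (f \<zeta>))"
        using integrable_norm[OF i1] by simp
    qed (use fp in auto)
    also have "(\<integral>\<zeta>. \<bar>P_kernel \<alpha> x \<zeta> - A\<bar> powr q \<partial>sphere_sigma) = K.m (norm x)"
    proof -
      have cA: "continuous_on UNIV (\<lambda>s::real. s - A)" by (intro continuous_intros)
      have hpsi: "continuous_on UNIV (\<lambda>s. psi q (s - A))"
        using continuous_on_compose2[OF psi_cont[OF q0] cA] by simp
      have "(\<integral>\<zeta>. psi q (P_kernel \<alpha> x \<zeta> - A) \<partial>sphere_sigma) = K.m (norm x)"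
        using rot_int[OF ks x hpsi] by (simp add: K.Phi_def K.m_def A_def q_def)
      then show ?thesis by (simp add: psi_def)
    qed
    also have "K.m (norm x) powr (1/q) = G (norm x)" using Geq[of "norm x"] x by simp
    finally show "norm (P_transform \<alpha> f x) \<le> G (norm x) * Lp_norm p f" by (simp add: Lp_norm_def)
  qed
  have partB: "G 0 = 0" using Geq[of 0] K.m0 q0 by simp
  define D where "D r = (1/q * K.m r powr (1/q - 1)) * K.Phir r (K.Amin r)" for r
  have mpos: "K.m r > 0" if "r \<in> {0<..<1}" for r using K.m_pos[of r] that by auto
  have hasD: "(G has_real_derivative D r) (at r)" if r: "r \<in> {0<..<1}" for r
  proof -
    have rI': "r \<in> K.I" using r by auto
    have "((\<lambda>x. K.m x powr (1/q)) has_real_derivative (1/q * K.m r powr (1/q - 1)) * K.Phir r (K.Amin r)) (at r)"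
      by (rule DERIV_chain2[OF has_real_derivative_powr[OF mpos[OF r]] K.m_deriv[OF rI']])
    then show ?thesis unfolding D_def
      by (rule has_field_derivative_transform_within_open[where S="{0<..<1}"]) (use r Geq in auto)
  qed
  have partC: "\<forall>r\<in>{0<..<1}. G differentiable (at r)"
    using hasD unfolding differentiable_def has_field_derivative_def by blast
  have partD: "continuous_on {0<..<1} (deriv G)"
  proof -
    have mc: "continuous_on {0<..<1} K.m"
    proof (rule continuous_at_imp_continuous_on, rule ballI)
      fix r :: real assume "r \<in> {0<..<1}"
      then have "r \<in> K.I" by auto
      from DERIV_isCont[OF K.m_deriv[OF this]] show "isCont K.m r" .
    qed
    have mne: "\<forall>x\<in>{0<..<1}. K.m x \<noteq> 0"
    proof
      fix x :: real assume "x \<in> {0<..<1}"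
      from mpos[OF this] show "K.m x \<noteq> 0" by simp
    qed
    have "continuous_on {0<..<1} D"
      unfolding D_def
      by (intro continuous_on_mult continuous_on_const continuous_on_powr mc
            continuous_on_subset[OF K.dm_cont]) (use mne in auto)
    moreover have "deriv G r = D r" if "r \<in> {0<..<1}" for r using DERIV_imp_deriv[OF hasD[OF that]] .
    ultimately show ?thesis using continuous_on_cong[OF refl, of "{0<..<1}" "deriv G" D] by simp
  qed
  have partE: "\<forall>x\<in>ball (0::(real,'n) vec) 1. \<forall>c::real.
         (\<forall>g. in_Lp p g \<and> P_transform \<alpha> g 0 = 0 \<longrightarrow> norm (P_transform \<alpha> g x) \<le> c * Lp_norm p g)
         \<longrightarrow> G (norm x) \<le> c"
  proof (intro ballI allI impI)
    fix x :: "(real,'n) vec" and c :: real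
    assume "x \<in> ball 0 1"
    then have x: "norm x < 1" by simp
    assume H: "\<forall>g. in_Lp p g \<and> P_transform \<alpha> g 0 = 0 \<longrightarrow> norm (P_transform \<alpha> g x) \<le> c * Lp_norm p g"
    show "G (norm x) \<le> c"
    proof (cases "x = 0")
      case True
      define y where "y = (1/2::real) *\<^sub>R (e_last :: (real,'n) vec)"
      have ny: "norm y = 1/2" by (simp add: y_def e_last_norm)
      have y1: "norm y < 1" using ny by simp
      from extremal[OF ks p y1] obtain g :: "(real,'n) vec \<Rightarrow> (real,'n) vec" where g: "in_Lp p g" "P_transform \<alpha> g 0 = 0" "Lp_norm p g = K.m (norm y) powr (1/p)"
        by blast
      have "norm y \<in> {0<..<1}" unfolding ny by simp
      then have "K.m (norm y) > 0" by (rule mpos)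
      then have Lp: "Lp_norm p g > 0" using g(3) by simp
      have "norm (P_transform \<alpha> g x) \<le> c * Lp_norm p g" using H g(1,2) by blast
      then have "0 \<le> c * Lp_norm p g" using True g(2) by simp
      then have "c \<ge> 0" using Lp by (simp add: zero_le_mult_iff)
      then show ?thesis using True partB by simp
    next
      case False
      then have r: "norm x \<in> {0<..<1}" using x by simp
      from extremal[OF ks p x] obtain g :: "(real,'n) vec \<Rightarrow> (real,'n) vec" where g: "in_Lp p g" "P_transform \<alpha> g 0 = 0"
          "norm (P_transform \<alpha> g x) = K.m (norm x)" "Lp_norm p g = K.m (norm x) powr (1/p)"
        by blast
      have mp: "K.m (norm x) > 0" by (rule mpos[OF r])
      have "K.m (norm x) \<le> c * K.m (norm x) powr (1/p)" using H g by auto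
      moreover have "K.m (norm x) = K.m (norm x) powr (1/q) * K.m (norm x) powr (1/p)"
        using mp by (simp add: powr_add[symmetric] iq)
      ultimately have "K.m (norm x) powr (1/q) * K.m (norm x) powr (1/p) \<le> c * K.m (norm x) powr (1/p)" by simp
      then have "K.m (norm x) powr (1/q) \<le> c" using mp by (simp add: mult_le_cancel_right_pos)
      then show ?thesis using Geq[of "norm x"] x by simp
    qed
  qed
  show ?thesis using partA partB partC partD partE by blast
qed


end
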